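(* Let $\mathbb{K}\in\{\mathbb{R},\mathbb{C}\}$ and $\mathcal{A}=(A_1,\ldots,A_d)$ positive semidefinite matrices in $\mathbb{K}^{n\times n}$. Then $$\mathrm{OptSOS}_d(\mathcal{A})\le\mathrm{OptSOS}_1(\mathcal{A})=\mathrm{OptSDP}(\mathcal{A}).$$
   Context: $\langle x,y\rangle=x^\dagger y$ with $\dagger$ the (conjugate) transpose, $\|x\|^2=\langle x,x\rangle$, $\langle A,X\rangle=\operatorname{Tr}(A^\dagger X)$. $\mathrm{OptSDP}(\mathcal{A})=\max\big\{\big(\prod_{i=1}^d\langle A_i,X\rangle\big)^{1/d}: X\text{ symmetric/Hermitian},\ X\succeq0,\ \operatorname{Tr}X=1\big\}$. A real polynomial $f$ is written $f\succeq0$ if it is a sum of squares of real polynomials; when $\mathbb{K}=\mathbb{C}$, polynomials in $x$ are regarded as real polynomials in $\operatorname{Re}x,\operatorname{Im}x$. With $\mathcal{S}_k$ the set of $k$-element subsets of $\{1,\ldots,d\}$, $\mathrm{OptSOS}_k(\mathcal{A})=\inf\{\lambda^{1/k}:\ \lambda\ge0,\ \alpha_I>0\ (I\in\mathcal{S}_k),\ \prod_{I\in\mathcal{S}_k}\alpha_I\ge1,\ \lambda\|x\|^{2k}-\binom dk^{-1}\sum_{I\in\mathcal{S}_k}\alpha_I\prod_{i\in I}\langle x,A_ix\rangle\succeq0\}$. *)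

theory Defs
  imports Complex_Main
begin

text \<open>The field K is represented as a subset of the complex numbers: either the reals
  (K = \<real>) or all complex numbers (K = UNIV). Vectors in K^n are functions
  nat => complex whose first n entries lie in K; n x n matrices are functions
  nat => nat => complex (only entries with indices < n matter).
  The matrices A_1..A_d are indexed A 0, ..., A (d-1).\<close>

definition Kvec :: "complex set \<Rightarrow> nat \<Rightarrow> (nat \<Rightarrow> complex) set" where
  "Kvec K n = {x. \<forall>j<n. x j \<in> K}"

definition Kmat :: "complex set \<Rightarrow> nat \<Rightarrow> (nat \<Rightarrow> nat \<Rightarrow> complex) \<Rightarrow> bool" where
  "Kmat K n M \<longleftrightarrow> (\<forall>i<n. \<forall>j<n. M i j \<in> K)"

definition qform :: "nat \<Rightarrow> (nat \<Rightarrow> nat \<Rightarrow> complex) \<Rightarrow> (nat \<Rightarrow> complex) \<Rightarrow> complex" where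
  "qform n M x = (\<Sum>i<n. \<Sum>j<n. cnj (x i) * M i j * x j)"

definition vnorm2 :: "nat \<Rightarrow> (nat \<Rightarrow> complex) \<Rightarrow> real" where
  "vnorm2 n x = (\<Sum>j<n. (cmod (x j))^2)"

definition hermitian :: "nat \<Rightarrow> (nat \<Rightarrow> nat \<Rightarrow> complex) \<Rightarrow> bool" where
  "hermitian n M \<longleftrightarrow> (\<forall>i<n. \<forall>j<n. M j i = cnj (M i j))"

definition psd :: "complex set \<Rightarrow> nat \<Rightarrow> (nat \<Rightarrow> nat \<Rightarrow> complex) \<Rightarrow> bool" where
  "psd K n M \<longleftrightarrow> Kmat K n M \<and> hermitian n M \<and> (\<forall>x\<in>Kvec K n. 0 \<le> Re (qform n M x))"

definition frob :: "nat \<Rightarrow> (nat \<Rightarrow> nat \<Rightarrow> complex) \<Rightarrow> (nat \<Rightarrow> nat \<Rightarrow> complex) \<Rightarrow> complex" where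
  "frob n A X = (\<Sum>i<n. \<Sum>j<n. cnj (A j i) * X j i)"

definition mtrace :: "nat \<Rightarrow> (nat \<Rightarrow> nat \<Rightarrow> complex) \<Rightarrow> complex" where
  "mtrace n X = (\<Sum>i<n. X i i)"

definition OptSDP :: "complex set \<Rightarrow> nat \<Rightarrow> nat \<Rightarrow> (nat \<Rightarrow> nat \<Rightarrow> nat \<Rightarrow> complex) \<Rightarrow> real" where
  "OptSDP K n d A = Sup {root d (\<Prod>i<d. Re (frob n (A i) X)) | X. psd K n X \<and> mtrace n X = 1}"

text \<open>Real polynomials in the real variables Re x_j, Im x_j (j < n), as functions of x.
  (For K = R the variables Im x_j vanish on K^n.)\<close>
inductive realpoly :: "nat \<Rightarrow> ((nat \<Rightarrow> complex) \<Rightarrow> real) \<Rightarrow> bool" for n where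
  const: "realpoly n (\<lambda>x. c)"
| re: "j < n \<Longrightarrow> realpoly n (\<lambda>x. Re (x j))"
| im: "j < n \<Longrightarrow> realpoly n (\<lambda>x. Im (x j))"
| add: "realpoly n p \<Longrightarrow> realpoly n q \<Longrightarrow> realpoly n (\<lambda>x. p x + q x)"
| mult: "realpoly n p \<Longrightarrow> realpoly n q \<Longrightarrow> realpoly n (\<lambda>x. p x * q x)"

text \<open>f is a sum of squares of real polynomials (identity as functions on K^n,
  which for real polynomials is the same as polynomial identity).\<close>
definition sos :: "complex set \<Rightarrow> nat \<Rightarrow> ((nat \<Rightarrow> complex) \<Rightarrow> real) \<Rightarrow> bool" where
  "sos K n f \<longleftrightarrow> (\<exists>ps. (\<forall>p\<in>set ps. realpoly n p) \<and>
      (\<forall>x\<in>Kvec K n. f x = (\<Sum>p\<leftarrow>ps. (p x)^2)))"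

definition subsetsK :: "nat \<Rightarrow> nat \<Rightarrow> nat set set" where
  "subsetsK d k = {I. I \<subseteq> {..<d} \<and> card I = k}"

definition OptSOS :: "complex set \<Rightarrow> nat \<Rightarrow> nat \<Rightarrow> (nat \<Rightarrow> nat \<Rightarrow> nat \<Rightarrow> complex) \<Rightarrow> nat \<Rightarrow> real" where
  "OptSOS K n d A k = Inf {root k lam | lam \<alpha>. lam \<ge> 0 \<and>
      (\<forall>I\<in>subsetsK d k. \<alpha> I > 0) \<and> (\<Prod>I\<in>subsetsK d k. \<alpha> I) \<ge> 1 \<and>
      sos K n (\<lambda>x. lam * vnorm2 n x ^ k - (1 / real (d choose k)) *
         (\<Sum>I\<in>subsetsK d k. \<alpha> I * (\<Prod>i\<in>I. Re (qform n (A i) x))))}"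

end

theory Submission
  imports Defs "HOL-Analysis.Analysis"
begin

definition cone :: "('a \<Rightarrow> real) set \<Rightarrow> bool" where
 "cone C \<longleftrightarrow> (\<forall>c\<ge>0. (\<lambda>x. c) \<in> C) \<and> (\<forall>f\<in>C. \<forall>g\<in>C. (\<lambda>x. f x + g x) \<in> C \<and> (\<lambda>x. f x * g x) \<in> C \<and> (\<lambda>x. (f x - g x)^2) \<in> C)"

lemma cone_const: "cone C \<Longrightarrow> c \<ge> 0 \<Longrightarrow> (\<lambda>x. c) \<in> C" by (simp add: cone_def)
lemma cone_add: "cone C \<Longrightarrow> f \<in> C \<Longrightarrow> g \<in> C \<Longrightarrow> (\<lambda>x. f x + g x) \<in> C" by (simp add: cone_def)
lemma cone_mult: "cone C \<Longrightarrow> f \<in> C \<Longrightarrow> g \<in> C \<Longrightarrow> (\<lambda>x. f x * g x) \<in> C" by (simp add: cone_def)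
lemma cone_sqdiff: "cone C \<Longrightarrow> f \<in> C \<Longrightarrow> g \<in> C \<Longrightarrow> (\<lambda>x. (f x - g x)^2) \<in> C" by (simp add: cone_def)
lemma cone_scale: "cone C \<Longrightarrow> c \<ge> 0 \<Longrightarrow> f \<in> C \<Longrightarrow> (\<lambda>x. c * f x) \<in> C"
  using cone_mult[of C "\<lambda>x. c" f] cone_const by auto

lemma cone_sum: assumes "cone C" "\<And>i. i \<in> I \<Longrightarrow> f i \<in> C"
  shows "(\<lambda>x. \<Sum>i\<in>I. f i x) \<in> C"
  using assms(2)
proof (induction I rule: infinite_finite_induct)
  case (infinite A) then show ?case using cone_const[OF assms(1), of 0] by simp
next
  case empty then show ?case using cone_const[OF assms(1), of 0] by simp
next
  case (insert a A)
  then show ?case using cone_add[OF assms(1), of "f a" "\<lambda>x. \<Sum>i\<in>A. f i x"] by simp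
qed

lemma cone_prod: assumes "cone C" "\<And>i. i \<in> I \<Longrightarrow> f i \<in> C"
  shows "(\<lambda>x. \<Prod>i\<in>I. f i x) \<in> C"
  using assms(2)
proof (induction I rule: infinite_finite_induct)
  case (infinite A) then show ?case using cone_const[OF assms(1), of 1] by simp
next
  case empty then show ?case using cone_const[OF assms(1), of 1] by simp
next
  case (insert a A)
  then show ?case using cone_mult[OF assms(1), of "f a" "\<lambda>x. \<Prod>i\<in>A. f i x"] by simp
qed

lemma cone_pow: assumes "cone C" "f \<in> C" shows "(\<lambda>x. f x ^ m) \<in> C"
  using cone_prod[OF assms(1), of "{..<m}" "\<lambda>_. f"] assms(2) by simp

lemma cone_ext: "f \<in> C \<Longrightarrow> (\<And>x. g x = f x) \<Longrightarrow> g \<in> C"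
proof -
  assume "f \<in> C" "\<And>x. g x = f x"
  then have "g = f" by auto
  then show ?thesis using \<open>f \<in> C\<close> by simp
qed

lemma cone_zero: "cone C \<Longrightarrow> (\<lambda>x. 0) \<in> C" using cone_const by auto

lemma cone_diff_pow:
  assumes "cone C" "f \<in> C" "g \<in> C" "(\<lambda>x. f x - g x) \<in> C"
  shows "(\<lambda>x. f x ^ m - g x ^ m) \<in> C"
proof (rule cone_ext)
  show "(\<lambda>x. (f x - g x) * (\<Sum>i<m. g x ^ (m - Suc i) * f x ^ i)) \<in> C"
    by (intro cone_mult[OF assms(1)] assms(4) cone_sum[OF assms(1)] cone_pow[OF assms(1)] assms(2,3))
  show "f x ^ m - g x ^ m = (f x - g x) * (\<Sum>i<m. g x ^ (m - Suc i) * f x ^ i)" for x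
    by (rule power_diff_sumr2)
qed

lemma tele2: "k \<le> m + 1 \<Longrightarrow> (z::real)^k * u^(m+1-k) - u^(m+1) = (z-u) * (\<Sum>j<k. z^j * u^(m-j))"
proof (induction k)
  case 0 then show ?case by simp
next
  case (Suc k)
  have e: "u^(m+1-k) = u * u^(m - k)" using Suc.prems by (simp add: Suc_diff_le)
  have "z^(Suc k) * u^(m+1-Suc k) - u^(m+1) = z^k * u^(m-k) * (z - u) + (z^k * u^(m+1-k) - u^(m+1))"
    using e by (simp add: algebra_simps)
  also have "\<dots> = (z-u) * (\<Sum>j<Suc k. z^j * u^(m-j))"
    using Suc by (simp add: algebra_simps)
  finally show ?case .
qed

lemma tele1: "k \<le> m + 2 \<Longrightarrow> (z::real)^k * u^(m+2-k) - z*u^(m+1) =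
   (z-u)^2 * (\<Sum>i<k. \<Sum>j<i. z^j * u^(m-j)) + (real k - 1)*(z-u)*u^(m+1)"
proof (induction k)
  case 0 then show ?case by (simp add: algebra_simps)
next
  case (Suc k)
  have k: "k \<le> m + 1" using Suc.prems by simp
  have e: "u^(m+2-k) = u * u^(m+1 - k)" using Suc.prems by (simp add: Suc_diff_le)
  have "z^(Suc k) * u^(m+2-Suc k) - z*u^(m+1) = (z^k * u^(m+2-k) - z*u^(m+1)) + (z - u) * (z^k * u^(m+1-k))"
    using e by (simp add: algebra_simps)
  also have "z^k * u^(m+1-k) = (z-u) * (\<Sum>j<k. z^j * u^(m-j)) + u^(m+1)"
    using tele2[OF k, of z u] by simp
  finally show ?case using Suc k by (simp add: algebra_simps power2_eq_square)
qed

lemma amgm_two: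
  fixes z u :: real
  shows "(real (m+1) * u + z)^(m+2) - real (m+2)^(m+2) * z * u^(m+1)
     = (z-u)^2 * (\<Sum>k\<le>m+2. (real (m+2 choose k) * real (m+1)^(m+2-k)) * (\<Sum>i<k. \<Sum>j<i. z^j * u^(m-j)))"
proof -
  define N where "N = m + 2"
  define a where "a k = real (N choose k) * real (m+1)^(N-k)" for k
  have bin: "(real (m+1) * u + z)^N = (\<Sum>k\<le>N. a k * (z^k * u^(N-k)))"
    unfolding binomial_ring[of z "real (m+1) * u" N, simplified add.commute[of z]] a_def
    by (intro sum.cong refl) (simp add: power_mult_distrib[symmetric] mult.commute)
  have s0: "(\<Sum>k\<le>N. a k) = real N ^ N"
    using binomial_ring[of 1 "real (m+1)" N] unfolding a_def N_def by (simp add: add.commute)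
  have s1: "(\<Sum>k\<le>N. real k * a k) = real N ^ N"
  proof -
    have "(\<Sum>k\<le>N. real k * a k) = (\<Sum>k\<le>N. (of_nat k * of_nat (N choose k)) * 1^(k-1) * real (m+1)^(N-k))"
      unfolding a_def by (simp add: algebra_simps)
    also have "\<dots> = real N * (1 + real (m+1))^(N-1)" by (rule binomial_deriv1)
    also have "\<dots> = real N ^ N" unfolding N_def by simp
    finally show ?thesis .
  qed
  have "(real (m+1) * u + z)^N - real N^N * z * u^(m+1) = (\<Sum>k\<le>N. a k * (z^k * u^(N-k) - z * u^(m+1)))"
  proof -
    have "(\<Sum>k\<le>N. a k * (z * u^(m+1))) = real N^N * z * u^(m+1)"
      using s0 by (simp add: sum_distrib_right[symmetric])
    then show ?thesis using bin by (simp add: sum_subtractf right_diff_distrib)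
  qed
  also have "\<dots> = (\<Sum>k\<le>N. a k * ((z-u)^2 * (\<Sum>i<k. \<Sum>j<i. z^j * u^(m-j)) + (real k - 1)*(z-u)*u^(m+1)))"
    by (rule sum.cong[OF refl], subst tele1[symmetric]) (auto simp: N_def)
  also have "\<dots> = (z-u)^2 * (\<Sum>k\<le>N. a k * (\<Sum>i<k. \<Sum>j<i. z^j * u^(m-j))) + (z-u)*u^(m+1) * ((\<Sum>k\<le>N. real k * a k) - (\<Sum>k\<le>N. a k))"
    by (simp add: sum.distrib sum_distrib_left sum_subtractf algebra_simps)
  also have "\<dots> = (z-u)^2 * (\<Sum>k\<le>N. a k * (\<Sum>i<k. \<Sum>j<i. z^j * u^(m-j)))" using s0 s1 by simp
  finally show ?thesis unfolding N_def a_def by simp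
qed

lemma cone_L:
  assumes C: "cone C" and u: "u \<in> C" and z: "z \<in> C"
  shows "(\<lambda>x. (real (m+1) * u x + z x)^(m+2) - real (m+2)^(m+2) * z x * u x^(m+1)) \<in> C"
proof (rule cone_ext)
  show "(\<lambda>x. (z x - u x)^2 * (\<Sum>k\<le>m+2. (real (m+2 choose k) * real (m+1)^(m+2-k)) * (\<Sum>i<k. \<Sum>j<i. z x^j * u x^(m-j)))) \<in> C"
    by (intro cone_mult[OF C] cone_sqdiff[OF C] z u cone_sum[OF C] cone_scale[OF C] cone_pow[OF C]) auto
qed (rule amgm_two)

lemma cone_amgm:
  assumes C: "cone C" and y: "\<And>i. i < d \<Longrightarrow> y i \<in> C"
  shows "(\<lambda>x. (\<Sum>i<d. y i x)^d - real d^d * (\<Prod>i<d. y i x)) \<in> C"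
  using y
proof (induction d)
  case 0 then show ?case using cone_zero[OF C] by simp
next
  case (Suc d)
  have IH: "(\<lambda>x. (\<Sum>i<d. y i x)^d - real d^d * (\<Prod>i<d. y i x)) \<in> C" using Suc by auto
  have z: "y d \<in> C" using Suc by auto
  show ?case
  proof (cases d)
    case 0 then show ?thesis using cone_zero[OF C] by simp
  next
    case (Suc m)
    define S where "S x = (\<Sum>i<d. y i x)" for x
    have SC: "S \<in> C" unfolding S_def using Suc.prems by (intro cone_sum[OF C]) auto
    define u where "u x = (1 / real d) * S x" for x
    have uC: "u \<in> C" unfolding u_def[abs_def] by (rule cone_scale[OF C _ SC]) simp
    have L: "(\<lambda>x. (real (m+1) * u x + y d x)^(m+2) - real (m+2)^(m+2) * y d x * u x^(m+1)) \<in> C"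
      by (rule cone_L[OF C uC z])
    have R: "(\<lambda>x. (real (d+1)^(d+1) / real d^d) * (y d x * ((\<Sum>i<d. y i x)^d - real d^d * (\<Prod>i<d. y i x)))) \<in> C"
      by (intro cone_scale[OF C] cone_mult[OF C] z IH) auto
    show ?thesis
    proof (rule cone_ext[OF cone_add[OF C L R]])
      fix x
      have dpos: "real d > 0" using Suc by simp
      have e1: "real (m+1) * u x = S x" using Suc dpos by (simp add: u_def)
      have e2: "u x ^ (m+1) = S x ^ d / real d ^ d" using Suc by (simp add: u_def power_divide)
      show "(\<Sum>i<Suc d. y i x) ^ Suc d - real (Suc d) ^ Suc d * (\<Prod>i<Suc d. y i x) =
        (real (m+1) * u x + y d x)^(m+2) - real (m+2)^(m+2) * y d x * u x^(m+1) +
        (real (d+1)^(d+1) / real d^d) * (y d x * ((\<Sum>i<d. y i x)^d - real d^d * (\<Prod>i<d. y i x)))"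
      proof -
        have md: "m + 2 = d + 1" "m + 1 = d" using Suc by auto
        have g: "\<And>(S::real) z P. (S + z) ^ (d+1) - real (d+1) ^ (d+1) * (P * z) =
           (S + z)^(d+1) - real (d+1)^(d+1) * z * (S ^ d / real d ^ d) +
          (real (d+1)^(d+1) / real d^d) * (z * (S^d - real d^d * P))"
          using dpos by (simp add: field_simps)
        have e1': "real (m+1) * u x + y d x = S x + y d x" using e1 by simp
        have e2': "real (m + 2) ^ (m + 2) * y d x * u x ^ (m + 1) = real (d+1)^(d+1) * y d x * (S x ^ d / real d ^ d)"
          using e2 md by (simp del: power_Suc add: power_add)
        have R: "(real (m+1) * u x + y d x)^(m+2) - real (m+2)^(m+2) * y d x * u x^(m+1) +
        (real (d+1)^(d+1) / real d^d) * (y d x * ((\<Sum>i<d. y i x)^d - real d^d * (\<Prod>i<d. y i x)))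
         = (S x + y d x)^(d+1) - real (d+1)^(d+1) * y d x * (S x ^ d / real d ^ d) +
        (real (d+1)^(d+1) / real d^d) * (y d x * (S x^d - real d^d * (\<Prod>i<d. y i x)))"
          by (simp only: e1' e2 md(1) S_def)
        have Lh: "(\<Sum>i<Suc d. y i x) ^ Suc d - real (Suc d) ^ Suc d * (\<Prod>i<Suc d. y i x)
           = (S x + y d x) ^ (d+1) - real (d+1) ^ (d+1) * ((\<Prod>i<d. y i x) * y d x)"
          by (simp add: S_def)
        show ?thesis unfolding R Lh using g[of "S x" "y d x" "\<Prod>i<d. y i x"]
          by (simp add: mult.commute mult.left_commute)
      qed
    qed
  qed
qed

lemma real_amgm:
  assumes "\<And>i. i < d \<Longrightarrow> (y i::real) \<ge> 0"
  shows "real d^d * (\<Prod>i<d. y i) \<le> (\<Sum>i<d. y i)^d"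
proof -
  define C :: "(unit \<Rightarrow> real) set" where "C = {f. \<forall>x. 0 \<le> f x}"
  have C: "cone C" unfolding cone_def C_def by auto
  have "(\<lambda>x. (\<Sum>i<d. (\<lambda>i (_::unit). y i) i x)^d - real d^d * (\<Prod>i<d. (\<lambda>i (_::unit). y i) i x)) \<in> C"
    by (rule cone_amgm[OF C]) (use assms in \<open>auto simp: C_def\<close>)
  then show ?thesis unfolding C_def by auto
qed

lemma real_amgm_root:
  assumes "\<And>i. i < d \<Longrightarrow> (y i::real) \<ge> 0" "d \<ge> 1"
  shows "root d (\<Prod>i<d. y i) \<le> (\<Sum>i<d. y i) / real d"
proof -
  have s: "(\<Sum>i<d. y i) / real d \<ge> 0" using assms by (intro divide_nonneg_nonneg sum_nonneg) auto
  have "(\<Prod>i<d. y i) \<le> ((\<Sum>i<d. y i) / real d)^d"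
    using real_amgm[of d y] assms by (simp add: power_divide field_simps)
  then have "root d (\<Prod>i<d. y i) \<le> root d (((\<Sum>i<d. y i) / real d)^d)"
    using assms by (simp add: real_root_le_iff)
  also have "\<dots> = (\<Sum>i<d. y i) / real d" using s assms by (simp add: real_root_power_cancel)
  finally show ?thesis .
qed

abbreviation Kok :: "complex set \<Rightarrow> bool" where "Kok K \<equiv> K = \<real> \<or> K = UNIV"

lemma K_add: "Kok K \<Longrightarrow> a \<in> K \<Longrightarrow> b \<in> K \<Longrightarrow> a + b \<in> K" by (auto simp: complex_is_Real_iff)
lemma K_diff: "Kok K \<Longrightarrow> a \<in> K \<Longrightarrow> b \<in> K \<Longrightarrow> a - b \<in> K" by (auto simp: complex_is_Real_iff)
lemma K_mult: "Kok K \<Longrightarrow> a \<in> K \<Longrightarrow> b \<in> K \<Longrightarrow> a * b \<in> K" by (auto simp: complex_is_Real_iff)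
lemma K_div: "Kok K \<Longrightarrow> a \<in> K \<Longrightarrow> b \<in> K \<Longrightarrow> a / b \<in> K" by (auto simp: complex_is_Real_iff Im_divide)
lemma K_uminus: "Kok K \<Longrightarrow> a \<in> K \<Longrightarrow> - a \<in> K" by (auto simp: complex_is_Real_iff)
lemma K_cnj: "Kok K \<Longrightarrow> a \<in> K \<Longrightarrow> cnj a \<in> K" by (auto simp: complex_is_Real_iff)
lemma K_real: "Kok K \<Longrightarrow> complex_of_real r \<in> K" by auto
lemma K_0: "Kok K \<Longrightarrow> 0 \<in> K" by auto
lemma K_1: "Kok K \<Longrightarrow> 1 \<in> K" by auto
lemma K_sum: "Kok K \<Longrightarrow> (\<And>i. i \<in> I \<Longrightarrow> f i \<in> K) \<Longrightarrow> sum f I \<in> K"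
  by (induction I rule: infinite_finite_induct) (auto intro: K_add)
lemmas K_intros = K_add K_diff K_mult K_div K_uminus K_cnj K_real K_0 K_1 K_sum

lemma qform_Suc: "qform (Suc n) M y = qform n M y + (\<Sum>i<n. cnj (y i) * M i n) * y n
   + cnj (y n) * (\<Sum>j<n. M n j * y j) + cnj (y n) * M n n * y n"
  unfolding qform_def by (simp add: sum.distrib sum_distrib_left sum_distrib_right algebra_simps)

lemma qform_cong: "(\<And>i. i < n \<Longrightarrow> x i = y i) \<Longrightarrow> (\<And>i j. i < n \<Longrightarrow> j < n \<Longrightarrow> M i j = N i j) \<Longrightarrow> qform n M x = qform n N y"
  unfolding qform_def by (intro sum.cong refl) auto

lemma herm_real: "hermitian n M \<Longrightarrow> i < n \<Longrightarrow> M i i = complex_of_real (Re (M i i))"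
  unfolding hermitian_def by (metis complex_cnj_cancel_iff complex_is_Real_iff Reals_cnj_iff of_real_Re)

lemma sum_delta_r: "i < (n::nat) \<Longrightarrow> (\<Sum>b<n. f b * (if b = i then 1 else 0)) = (f i :: complex)"
proof -
  assume "i < n"
  have "(\<Sum>b<n. f b * (if b = i then 1 else 0)) = (\<Sum>b<n. if b = i then f b else 0)"
    by (rule sum.cong) auto
  also have "\<dots> = f i" using \<open>i < n\<close> by (subst sum.delta) auto
  finally show ?thesis .
qed

lemma sum_delta_l: "i < (n::nat) \<Longrightarrow> (\<Sum>b<n. (if b = i then 1 else 0) * f b) = (f i :: complex)"
  using sum_delta_r[of i n f] by (simp add: mult.commute)

lemma qform_unit: "i < n \<Longrightarrow> qform n M (\<lambda>j. if j = i then 1 else 0) = M i i"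
proof -
  assume i: "i < n"
  have "qform n M (\<lambda>j. if j = i then 1 else 0) = (\<Sum>a<n. (if a = i then 1 else 0) * (\<Sum>b<n. M a b * (if b = i then 1 else 0)))"
    unfolding qform_def by (intro sum.cong refl) (auto simp: sum_distrib_left mult.assoc)
  also have "\<dots> = (\<Sum>a<n. (if a = i then 1 else 0) * M a i)"
    using i by (simp add: sum_delta_r)
  also have "\<dots> = M i i" using i by (rule sum_delta_l)
  finally show ?thesis .
qed

lemma psd_diag:
  assumes K: "Kok K" and P: "psd K n M" and i: "i < n"
  shows "Re (M i i) \<ge> 0"
proof -
  define x where "x = (\<lambda>j. if j = i then (1::complex) else 0)"
  have "x \<in> Kvec K n" using K unfolding Kvec_def x_def by auto
  then have "0 \<le> Re (qform n M x)" using P unfolding psd_def by auto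
  also have "qform n M x = M i i" unfolding x_def using i by (rule qform_unit)
  finally show ?thesis .
qed

lemma psd_zero_pivot:
  assumes K: "Kok K" and P: "psd K (Suc n) M" and z: "M n n = 0" and j: "j < n"
  shows "M n j = 0"
proof (rule ccontr)
  assume c0: "M n j \<noteq> 0"
  define c where "c = M n j"
  have H: "hermitian (Suc n) M" and KM: "Kmat K (Suc n) M" using P unfolding psd_def by auto
  have herm: "M j n = cnj c" using H j unfolding hermitian_def c_def
    by (metis less_Suc_eq lessI)
  have cK: "c \<in> K" using KM j unfolding Kmat_def c_def by auto
  define r where "r = (\<bar>Re (M j j)\<bar> + 1) / (2 * (cmod c)^2)"
  have cpos: "cmod c > 0" using c0 c_def by simp
  define s where "s = - complex_of_real r * c"
  define x where "x = (\<lambda>i. if i = j then (1::complex) else if i = n then s else 0)"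
  have sK: "s \<in> K" unfolding s_def using K cK by (intro K_mult K_uminus K_real) auto
  have "x \<in> Kvec K (Suc n)" using K sK unfolding Kvec_def x_def by auto
  then have ge: "0 \<le> Re (qform (Suc n) M x)" using P unfolding psd_def by auto
  have q1: "qform n M x = M j j"
  proof -
    have "qform n M x = qform n M (\<lambda>i. if i = j then 1 else 0)"
      by (rule qform_cong) (auto simp: x_def)
    also have "\<dots> = M j j" using j by (rule qform_unit)
    finally show ?thesis .
  qed
  have q2: "(\<Sum>i<n. cnj (x i) * M i n) = M j n"
  proof -
    have "(\<Sum>i<n. cnj (x i) * M i n) = (\<Sum>i<n. (if i = j then 1 else 0) * M i n)"
      by (rule sum.cong) (auto simp: x_def)
    also have "\<dots> = M j n" using j by (rule sum_delta_l)
    finally show ?thesis .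
  qed
  have q3: "(\<Sum>i<n. M n i * x i) = M n j"
  proof -
    have "(\<Sum>i<n. M n i * x i) = (\<Sum>i<n. M n i * (if i = j then 1 else 0))"
      by (rule sum.cong) (auto simp: x_def)
    also have "\<dots> = M n j" using j by (rule sum_delta_r)
    finally show ?thesis .
  qed
  have xn: "x n = s" unfolding x_def using j by simp
  have "qform (Suc n) M x = M j j + cnj c * s + cnj s * c"
    unfolding qform_Suc q1 q2 q3 xn z herm c_def[symmetric] by simp
  also have "\<dots> = M j j - complex_of_real (2 * r * (cmod c)^2)"
  proof -
    have cc: "cnj c * c = complex_of_real ((cmod c)^2)" using complex_norm_square[of c] by (simp add: mult.commute)
    show ?thesis unfolding s_def using cc by (simp add: algebra_simps)
  qed
  finally have "Re (qform (Suc n) M x) = Re (M j j) - 2 * r * (cmod c)^2" by simp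
  also have "2 * r * (cmod c)^2 = \<bar>Re (M j j)\<bar> + 1" unfolding r_def using cpos by simp
  finally show False using ge by linarith
qed


lemma psd_restrict:
  assumes K: "Kok K" and P: "psd K (Suc n) M"
  shows "psd K n M"
  unfolding psd_def
proof (intro conjI ballI)
  show "Kmat K n M" using P unfolding psd_def Kmat_def by auto
  show "hermitian n M" using P unfolding psd_def hermitian_def by (meson less_SucI)
  fix x assume x: "x \<in> Kvec K n"
  define y where "y = x(n := 0)"
  have y: "y \<in> Kvec K (Suc n)" using x K unfolding y_def Kvec_def by (auto simp: less_Suc_eq)
  have "qform (Suc n) M y = qform n M x"
    unfolding qform_Suc by (simp add: y_def qform_def)
  then show "0 \<le> Re (qform n M x)" using P y unfolding psd_def by metis
qed

lemma qform_split: "qform n (\<lambda>i j. M i j - cnj (w i) * w j) x = qform n M x - cnj (\<Sum>j<n. w j * x j) * (\<Sum>j<n. w j * x j)"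
  unfolding qform_def by (simp add: algebra_simps sum_subtractf sum_distrib_left sum_distrib_right)

lemma psd_schur:
  assumes K: "Kok K" and P: "psd K (Suc n) M" and a: "Re (M n n) > 0"
  defines "w \<equiv> \<lambda>j. M n j / complex_of_real (sqrt (Re (M n n)))"
  shows "psd K n (\<lambda>i j. M i j - cnj (w i) * w j)"
  unfolding psd_def
proof (intro conjI ballI)
  have H: "hermitian (Suc n) M" and KM: "Kmat K (Suc n) M" using P unfolding psd_def by auto
  define r where "r = Re (M n n)"
  have Mnn: "M n n = complex_of_real r" unfolding r_def using herm_real[OF H] by simp
  have wK: "w j \<in> K" if "j < Suc n" for j
    unfolding w_def using KM that K unfolding Kmat_def by (intro K_div K_real) auto
  show "Kmat K n (\<lambda>i j. M i j - cnj (w i) * w j)"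
    using KM wK K unfolding Kmat_def by (auto intro!: K_diff K_mult K_cnj)
  show "hermitian n (\<lambda>i j. M i j - cnj (w i) * w j)"
    unfolding hermitian_def
  proof (intro allI impI)
    fix i j assume "i < n" "j < n"
    then have "M j i = cnj (M i j)" using H unfolding hermitian_def by (meson less_SucI)
    then show "M j i - cnj (w j) * w i = cnj (M i j - cnj (w i) * w j)" by (simp add: mult.commute)
  qed
  fix x assume x: "x \<in> Kvec K n"
  define \<beta> where "\<beta> = (\<Sum>j<n. M n j * x j)"
  have \<beta>K: "\<beta> \<in> K" unfolding \<beta>_def using x KM K unfolding Kvec_def Kmat_def
    by (intro K_sum K_mult) auto
  define y where "y = x(n := - \<beta> / complex_of_real r)"
  have y: "y \<in> Kvec K (Suc n)" using x K \<beta>K unfolding y_def Kvec_def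
    by (auto simp: less_Suc_eq intro!: K_div K_uminus)
  have s1: "(\<Sum>i<n. cnj (y i) * M i n) = cnj \<beta>"
  proof -
    have "(\<Sum>i<n. cnj (y i) * M i n) = (\<Sum>i<n. cnj (M n i * x i))"
    proof (intro sum.cong refl)
      fix i assume "i \<in> {..<n}"
      then have "M i n = cnj (M n i)" using H unfolding hermitian_def by (meson lessThan_iff less_SucI lessI)
      then show "cnj (y i) * M i n = cnj (M n i * x i)" using \<open>i \<in> {..<n}\<close> by (simp add: y_def mult.commute)
    qed
    then show ?thesis unfolding \<beta>_def by simp
  qed
  have s2: "(\<Sum>j<n. M n j * y j) = \<beta>" unfolding \<beta>_def y_def by simp
  have q0: "qform n M y = qform n M x" by (rule qform_cong) (auto simp: y_def)
  have rpos: "r > 0" using a r_def by simp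
  have "qform (Suc n) M y = qform n M x - cnj \<beta> * \<beta> / complex_of_real r"
    unfolding qform_Suc s1 s2 q0 Mnn using rpos by (simp add: y_def field_simps)
  moreover have "qform n (\<lambda>i j. M i j - cnj (w i) * w j) x = qform n M x - cnj \<beta> * \<beta> / complex_of_real r"
  proof -
    have g: "(\<Sum>j<n. w j * x j) = \<beta> / complex_of_real (sqrt r)"
      unfolding w_def \<beta>_def r_def by (simp add: sum_divide_distrib)
    have sq: "(complex_of_real (sqrt r))^2 = complex_of_real r"
      using rpos by (simp flip: of_real_power)
    show ?thesis unfolding qform_split g using rpos sq
      by (simp add: field_simps power2_eq_square[symmetric])
  qed
  ultimately have "qform n (\<lambda>i j. M i j - cnj (w i) * w j) x = qform (Suc n) M y" by simp
  then show "0 \<le> Re (qform n (\<lambda>i j. M i j - cnj (w i) * w j) x)" using P y unfolding psd_def by metis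
qed


lemma herm_at: "hermitian n M \<Longrightarrow> i < n \<Longrightarrow> j < n \<Longrightarrow> M j i = cnj (M i j)"
  unfolding hermitian_def by blast

lemma ldl:
  assumes K: "Kok K" and P: "psd K n M"
  shows "\<exists>u. (\<forall>k<n. \<forall>j<n. u k j \<in> K) \<and> (\<forall>i<n. \<forall>j<n. M i j = (\<Sum>k<n. cnj (u k i) * u k j))"
  using P
proof (induction n arbitrary: M)
  case 0 then show ?case by auto
next
  case (Suc n M)
  have H: "hermitian (Suc n) M" and KM: "Kmat K (Suc n) M" using Suc.prems unfolding psd_def by auto
  define r where "r = Re (M n n)"
  have Mnn: "M n n = complex_of_real r" unfolding r_def using herm_real[OF H] by simp
  have r0: "r \<ge> 0" unfolding r_def using psd_diag[OF K Suc.prems] by simp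
  show ?case
  proof (cases "r = 0")
    case True
    have z: "M n n = 0" using Mnn True by simp
    have row: "M n j = 0" if "j < n" for j using psd_zero_pivot[OF K Suc.prems z that] .
    have col: "M j n = 0" if "j < n" for j using row[OF that] herm_at[OF H, of n j] that by simp
    obtain u' where u'K: "\<forall>k<n. \<forall>j<n. u' k j \<in> K" and u'e: "\<forall>i<n. \<forall>j<n. M i j = (\<Sum>k<n. cnj (u' k i) * u' k j)"
      using Suc.IH[OF psd_restrict[OF K Suc.prems]] by blast
    define u where "u k j = (if k < n \<and> j < n then u' k j else 0)" for k j
    show ?thesis
    proof (rule exI[of _ u], intro conjI allI impI)
      fix k j assume "k < Suc n" "j < Suc n" then show "u k j \<in> K" using u'K K unfolding u_def by auto
    next
      fix i j assume i: "i < Suc n" and j: "j < Suc n"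
      show "M i j = (\<Sum>k<Suc n. cnj (u k i) * u k j)"
      proof (cases "i < n \<and> j < n")
        case True
        then show ?thesis using u'e unfolding u_def by simp
      next
        case False
        then have "M i j = 0" using i j z row col by (auto simp: less_Suc_eq)
        moreover have "(\<Sum>k<Suc n. cnj (u k i) * u k j) = 0" using False unfolding u_def by (auto intro: sum.neutral)
        ultimately show ?thesis by simp
      qed
    qed
  next
    case False
    then have rpos: "r > 0" using r0 by simp
    define w where "w = (\<lambda>j. M n j / complex_of_real (sqrt (Re (M n n))))"
    have wK: "w j \<in> K" if "j < Suc n" for j
      unfolding w_def using KM that K unfolding Kmat_def by (intro K_div K_real) auto
    have PS: "psd K n (\<lambda>i j. M i j - cnj (w i) * w j)"
      unfolding w_def by (rule psd_schur[OF K Suc.prems]) (use rpos r_def in simp)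
    obtain u' where u'K: "\<forall>k<n. \<forall>j<n. u' k j \<in> K"
      and u'e: "\<forall>i<n. \<forall>j<n. M i j - cnj (w i) * w j = (\<Sum>k<n. cnj (u' k i) * u' k j)"
      using Suc.IH[OF PS] by blast
    define u where "u k j = (if k < n then (if j < n then u' k j else 0) else w j)" for k j
    have sq: "complex_of_real (sqrt r) * complex_of_real (sqrt r) = complex_of_real r"
      using rpos by (simp flip: of_real_mult)
    have sp: "complex_of_real (sqrt r) \<noteq> 0" using rpos by simp
    have wn: "w n = complex_of_real (sqrt r)" unfolding w_def Mnn using rpos
      by (simp add: field_simps flip: of_real_mult)
    show ?thesis
    proof (rule exI[of _ u], intro conjI allI impI)
      fix k j assume "k < Suc n" "j < Suc n" then show "u k j \<in> K" using u'K wK K unfolding u_def by auto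
    next
      fix i j assume i: "i < Suc n" and j: "j < Suc n"
      have split: "(\<Sum>k<Suc n. cnj (u k i) * u k j) = (\<Sum>k<n. cnj (u k i) * u k j) + cnj (w i) * w j"
        unfolding u_def by simp
      show "M i j = (\<Sum>k<Suc n. cnj (u k i) * u k j)"
      proof (cases "i < n \<and> j < n")
        case True
        then have "M i j - cnj (w i) * w j = (\<Sum>k<n. cnj (u' k i) * u' k j)" using u'e by blast
        then show ?thesis unfolding split using True unfolding u_def by (simp add: algebra_simps)
      next
        case False
        have s0: "(\<Sum>k<n. cnj (u k i) * u k j) = 0" using False unfolding u_def by (auto intro: sum.neutral)
        have "M i j = cnj (w i) * w j"
        proof (cases "i = n")
          case True
          then show ?thesis using sp sq Mnn by (simp add: w_def r_def[symmetric])
        next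
          case False
          then have "i < n" "j = n" using i j \<open>\<not> (i < n \<and> j < n)\<close> by auto
          then have "M i j = cnj (M n i)" using herm_at[OF H, of n i] by simp
          then show ?thesis using \<open>j = n\<close> sp sq Mnn by (simp add: w_def r_def[symmetric])
        qed
        then show ?thesis unfolding split s0 by simp
      qed
    qed
  qed
qed

lemma realpoly_neg: "realpoly n p \<Longrightarrow> realpoly n (\<lambda>x. - p x)"
  using realpoly.mult[OF realpoly.const[of n "-1"]] by simp
lemma realpoly_diff: "realpoly n p \<Longrightarrow> realpoly n q \<Longrightarrow> realpoly n (\<lambda>x. p x - q x)"
  using realpoly.add[OF _ realpoly_neg] by simp
lemma realpoly_scale: "realpoly n p \<Longrightarrow> realpoly n (\<lambda>x. c * p x)"
  using realpoly.mult[OF realpoly.const] by simp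
lemma realpoly_sum: "(\<And>i. i \<in> I \<Longrightarrow> realpoly n (f i)) \<Longrightarrow> realpoly n (\<lambda>x. \<Sum>i\<in>I. f i x)"
proof (induction I rule: infinite_finite_induct)
  case (infinite A) then show ?case using realpoly.const[of n 0] by simp
next
  case empty then show ?case using realpoly.const[of n 0] by simp
next
  case (insert a A) then show ?case using realpoly.add[of n "f a" "\<lambda>x. \<Sum>i\<in>A. f i x"] by simp
qed
lemma realpoly_sum_list: "(\<And>p. p \<in> set ps \<Longrightarrow> realpoly n p) \<Longrightarrow> realpoly n (\<lambda>x. \<Sum>p\<leftarrow>ps. (p x)^2)"
proof (induction ps)
  case Nil then show ?case using realpoly.const[of n 0] by simp
next
  case (Cons a ps)
  then show ?case using realpoly.add[OF realpoly.mult[of n a a]] by (simp add: power2_eq_square)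
qed

lemma realpoly_Re_lin: "realpoly n (\<lambda>x. Re (\<Sum>j<n. c j * x j))"
  by (simp add: Re_sum) (intro realpoly_sum realpoly_diff realpoly_scale realpoly.re realpoly.im; simp)
lemma realpoly_Im_lin: "realpoly n (\<lambda>x. Im (\<Sum>j<n. c j * x j))"
  by (simp add: Im_sum) (intro realpoly_sum realpoly.add realpoly_scale realpoly.re realpoly.im; simp)

lemma sos_nonneg: "sos K n f \<Longrightarrow> x \<in> Kvec K n \<Longrightarrow> f x \<ge> 0"
  unfolding sos_def by (auto intro!: sum_list_nonneg)

lemma sos_ext: "sos K n f \<Longrightarrow> (\<And>x. x \<in> Kvec K n \<Longrightarrow> g x = f x) \<Longrightarrow> sos K n g"
  unfolding sos_def by metis

lemma sos_add: "sos K n f \<Longrightarrow> sos K n g \<Longrightarrow> sos K n (\<lambda>x. f x + g x)"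
  unfolding sos_def
proof (elim exE conjE)
  fix ps qs assume "\<forall>p\<in>set ps. realpoly n p" "\<forall>x\<in>Kvec K n. f x = (\<Sum>p\<leftarrow>ps. (p x)\<^sup>2)"
    "\<forall>p\<in>set qs. realpoly n p" "\<forall>x\<in>Kvec K n. g x = (\<Sum>p\<leftarrow>qs. (p x)\<^sup>2)"
  then show "\<exists>ps. (\<forall>p\<in>set ps. realpoly n p) \<and> (\<forall>x\<in>Kvec K n. f x + g x = (\<Sum>p\<leftarrow>ps. (p x)\<^sup>2))"
    by (intro exI[of _ "ps @ qs"]) auto
qed

lemma sumlist_sq_mult: "(\<Sum>p\<leftarrow>ps. (p x)^2) * (\<Sum>q\<leftarrow>qs. (q x)^2) =
   (\<Sum>r\<leftarrow>concat (map (\<lambda>p. map (\<lambda>q x. p x * q x) qs) ps). (r x)^2)" for x :: 'a and ps qs :: "('a \<Rightarrow> real) list"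
proof (induction ps)
  case Nil then show ?case by simp
next
  case (Cons a ps)
  have "(\<Sum>r\<leftarrow>map (\<lambda>q x. a x * q x) qs. (r x)^2) = (a x)^2 * (\<Sum>q\<leftarrow>qs. (q x)^2)"
    by (induction qs) (auto simp: algebra_simps power_mult_distrib)
  then show ?case using Cons by (simp add: algebra_simps)
qed

lemma sos_mult: "sos K n f \<Longrightarrow> sos K n g \<Longrightarrow> sos K n (\<lambda>x. f x * g x)"
  unfolding sos_def
proof (elim exE conjE)
  fix ps qs assume a: "\<forall>p\<in>set ps. realpoly n p" "\<forall>x\<in>Kvec K n. f x = (\<Sum>p\<leftarrow>ps. (p x)\<^sup>2)"
    "\<forall>p\<in>set qs. realpoly n p" "\<forall>x\<in>Kvec K n. g x = (\<Sum>p\<leftarrow>qs. (p x)\<^sup>2)"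
  show "\<exists>rs. (\<forall>p\<in>set rs. realpoly n p) \<and> (\<forall>x\<in>Kvec K n. f x * g x = (\<Sum>p\<leftarrow>rs. (p x)\<^sup>2))"
    by (intro exI[of _ "concat (map (\<lambda>p. map (\<lambda>q x. p x * q x) qs) ps)"])
       (use a in \<open>auto simp: sumlist_sq_mult intro: realpoly.mult\<close>)
qed

lemma sos_sq: "realpoly n p \<Longrightarrow> sos K n (\<lambda>x. (p x)^2)"
  unfolding sos_def by (intro exI[of _ "[p]"]) auto

lemma sos_const: "c \<ge> 0 \<Longrightarrow> sos K n (\<lambda>x. c)"
  using sos_sq[OF realpoly.const[of n "sqrt c"], of K] by simp

lemma sos_realpoly: "sos K n f \<Longrightarrow> \<exists>F. realpoly n F \<and> (\<forall>x\<in>Kvec K n. f x = F x)"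
  unfolding sos_def using realpoly_sum_list by blast

lemma sos_sqdiff: "sos K n f \<Longrightarrow> sos K n g \<Longrightarrow> sos K n (\<lambda>x. (f x - g x)^2)"
proof -
  assume "sos K n f" "sos K n g"
  then obtain F G where "realpoly n F" "\<forall>x\<in>Kvec K n. f x = F x" "realpoly n G" "\<forall>x\<in>Kvec K n. g x = G x"
    using sos_realpoly by metis
  then show ?thesis using sos_sq[OF realpoly_diff, of n F G K] by (auto intro: sos_ext)
qed

lemma sos_cone: "cone {f. sos K n f}"
  unfolding cone_def using sos_const sos_add sos_mult sos_sqdiff by auto

lemma sos_sum: "(\<And>i. i \<in> I \<Longrightarrow> sos K n (f i)) \<Longrightarrow> sos K n (\<lambda>x. \<Sum>i\<in>I. f i x)"
  using cone_sum[OF sos_cone, of I f K n] by auto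

lemma swap3: "(\<Sum>i\<in>A. \<Sum>j\<in>B. \<Sum>k\<in>C. f i j k) = (\<Sum>k\<in>C. \<Sum>i\<in>A. \<Sum>j\<in>B. (f i j k :: 'a::comm_monoid_add))"
proof -
  have "(\<Sum>i\<in>A. \<Sum>j\<in>B. \<Sum>k\<in>C. f i j k) = (\<Sum>i\<in>A. \<Sum>k\<in>C. \<Sum>j\<in>B. f i j k)"
    by (rule sum.cong[OF refl], rule sum.swap)
  also have "\<dots> = (\<Sum>k\<in>C. \<Sum>i\<in>A. \<Sum>j\<in>B. f i j k)" by (rule sum.swap)
  finally show ?thesis .
qed

lemma qform_ldl:
  assumes "\<forall>i<n. \<forall>j<n. M i j = (\<Sum>k<n. cnj (u k i) * u k j)"
  shows "qform n M x = (\<Sum>k<n. cnj (\<Sum>j<n. u k j * x j) * (\<Sum>j<n. u k j * x j))"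
proof -
  have "qform n M x = (\<Sum>i<n. \<Sum>j<n. \<Sum>k<n. cnj (x i) * (cnj (u k i) * u k j) * x j)"
    unfolding qform_def using assms by (simp add: sum_distrib_left sum_distrib_right)
  also have "\<dots> = (\<Sum>k<n. \<Sum>i<n. \<Sum>j<n. cnj (u k i * x i) * (u k j * x j))"
    by (subst swap3) (simp add: algebra_simps)
  also have "\<dots> = (\<Sum>k<n. cnj (\<Sum>j<n. u k j * x j) * (\<Sum>j<n. u k j * x j))"
    by (simp only: cnj_sum sum_product)
  finally show ?thesis .
qed

lemma Re_cnj_mult_self: "Re (cnj z * z) = (Re z)^2 + (Im z)^2"
  by (simp add: power2_eq_square)

lemma psd_sos:
  assumes K: "Kok K" and P: "psd K n M"
  shows "sos K n (\<lambda>x. Re (qform n M x))"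
proof -
  obtain u where u: "\<forall>i<n. \<forall>j<n. M i j = (\<Sum>k<n. cnj (u k i) * u k j)" using ldl[OF K P] by blast
  have "sos K n (\<lambda>x. \<Sum>k<n. (Re (\<Sum>j<n. u k j * x j))^2 + (Im (\<Sum>j<n. u k j * x j))^2)"
    by (intro sos_sum sos_add sos_sq realpoly_Re_lin realpoly_Im_lin)
  then show ?thesis
    by (rule sos_ext) (simp only: qform_ldl[OF u] Re_sum Re_cnj_mult_self)
qed

lemma psd_Re_qform_sum:
  assumes K: "Kok K" and P: "psd K n M"
  shows "Re (qform n M x) \<ge> 0"
proof -
  obtain u where u: "\<forall>i<n. \<forall>j<n. M i j = (\<Sum>k<n. cnj (u k i) * u k j)" using ldl[OF K P] by blast
  show ?thesis unfolding qform_ldl[OF u] Re_sum Re_cnj_mult_self by (intro sum_nonneg) auto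
qed

lemma frob_ldl:
  assumes H: "hermitian n M" and X: "\<forall>i<n. \<forall>j<n. X i j = (\<Sum>k<n. cnj (u k i) * u k j)"
  shows "frob n M X = (\<Sum>k<n. qform n M (\<lambda>i. cnj (u k i)))"
proof -
  have "frob n M X = (\<Sum>i<n. \<Sum>j<n. \<Sum>k<n. u k i * M i j * cnj (u k j))"
    unfolding frob_def
  proof (intro sum.cong refl)
    fix i j assume "i \<in> {..<n}" "j \<in> {..<n}"
    then have "cnj (M j i) = M i j" using herm_at[OF H, of i j] by simp
    then show "cnj (M j i) * X j i = (\<Sum>k<n. u k i * M i j * cnj (u k j))"
      using X \<open>i \<in> {..<n}\<close> \<open>j \<in> {..<n}\<close> by (simp add: sum_distrib_left algebra_simps)
  qed
  also have "\<dots> = (\<Sum>k<n. \<Sum>i<n. \<Sum>j<n. u k i * M i j * cnj (u k j))" by (rule swap3)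
  also have "\<dots> = (\<Sum>k<n. qform n M (\<lambda>i. cnj (u k i)))" unfolding qform_def by simp
  finally show ?thesis .
qed

lemma frob_psd_nonneg:
  assumes K: "Kok K" and PM: "psd K n M" and PX: "psd K n X"
  shows "Re (frob n M X) \<ge> 0"
proof -
  obtain u where uK: "\<forall>k<n. \<forall>j<n. u k j \<in> K" and u: "\<forall>i<n. \<forall>j<n. X i j = (\<Sum>k<n. cnj (u k i) * u k j)"
    using ldl[OF K PX] by blast
  have H: "hermitian n M" using PM unfolding psd_def by auto
  have "\<forall>k<n. (\<lambda>i. cnj (u k i)) \<in> Kvec K n" using uK K unfolding Kvec_def by (auto intro: K_cnj)
  then have "\<forall>k<n. Re (qform n M (\<lambda>i. cnj (u k i))) \<ge> 0" using PM unfolding psd_def by auto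
  then show ?thesis unfolding frob_ldl[OF H u] Re_sum by (intro sum_nonneg) auto
qed

lemma cnj_if0: "cnj (if P then complex_of_real a else 0) = (if P then complex_of_real a else 0)" by simp

definition Mlin :: "nat \<Rightarrow> real \<Rightarrow> (nat \<Rightarrow> real) \<Rightarrow> (nat \<Rightarrow> nat \<Rightarrow> nat \<Rightarrow> complex) \<Rightarrow> nat \<Rightarrow> nat \<Rightarrow> complex" where
  "Mlin d lam b A i j = (if i = j then complex_of_real lam else 0) - (\<Sum>l<d. complex_of_real (b l) * A l i j)"

lemma sum_delta_c: "i < (n::nat) \<Longrightarrow> (\<Sum>j<n. (if j = i then c else 0) * f j) = (c * f i :: complex)"
proof -
  assume "i < n"
  have "(\<Sum>j<n. (if j = i then c else 0) * f j) = (\<Sum>j<n. if j = i then c * f j else 0)"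
    by (rule sum.cong) auto
  also have "\<dots> = c * f i" using \<open>i < n\<close> by (subst sum.delta) auto
  finally show ?thesis .
qed

lemma sum_delta_c': "i < (n::nat) \<Longrightarrow> (\<Sum>j<n. f j * (if i = j then c else 0)) = (f i * c :: complex)"
  using sum_delta_c[of i n c f] by (simp add: mult.commute eq_commute[of i])

lemma qform_Mlin: "qform n (Mlin d lam b A) x = complex_of_real (lam * vnorm2 n x) - (\<Sum>l<d. complex_of_real (b l) * qform n (A l) x)"
proof -
  have "qform n (Mlin d lam b A) x = (\<Sum>i<n. \<Sum>j<n. cnj (x i) * (if i = j then complex_of_real lam else 0) * x j)
      - (\<Sum>i<n. \<Sum>j<n. \<Sum>l<d. cnj (x i) * (complex_of_real (b l) * A l i j) * x j)"
    unfolding qform_def Mlin_def by (simp add: algebra_simps sum_subtractf sum_distrib_left sum_distrib_right)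
  also have "(\<Sum>i<n. \<Sum>j<n. cnj (x i) * (if i = j then complex_of_real lam else 0) * x j) = (\<Sum>i<n. cnj (x i) * complex_of_real lam * x i)"
  proof (rule sum.cong[OF refl])
    fix i assume "i \<in> {..<n}"
    then show "(\<Sum>j<n. cnj (x i) * (if i = j then complex_of_real lam else 0) * x j) = cnj (x i) * complex_of_real lam * x i"
      using sum_delta_c'[where i=i and n=n and c="complex_of_real lam" and f="\<lambda>j. cnj (x i) * x j"] by (simp add: algebra_simps)
  qed
  also have "\<dots> = complex_of_real (lam * vnorm2 n x)"
    unfolding vnorm2_def by (simp add: sum_distrib_left complex_norm_square mult.commute mult.left_commute flip: of_real_power)
  also have "(\<Sum>i<n. \<Sum>j<n. \<Sum>l<d. cnj (x i) * (complex_of_real (b l) * A l i j) * x j) = (\<Sum>l<d. complex_of_real (b l) * qform n (A l) x)"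
    unfolding qform_def by (subst swap3) (simp add: sum_distrib_left algebra_simps)
  finally show ?thesis .
qed

lemma frob_Mlin: "frob n (Mlin d lam b A) X = complex_of_real lam * mtrace n X - (\<Sum>l<d. complex_of_real (b l) * frob n (A l) X)"
proof -
  have "frob n (Mlin d lam b A) X = (\<Sum>i<n. \<Sum>j<n. (if j = i then complex_of_real lam else 0) * X j i)
      - (\<Sum>i<n. \<Sum>j<n. \<Sum>l<d. complex_of_real (b l) * (cnj (A l j i) * X j i))"
    unfolding frob_def Mlin_def by (simp add: algebra_simps sum_subtractf sum_distrib_left sum_distrib_right cnj_sum cnj_if0)
  also have "(\<Sum>i<n. \<Sum>j<n. (if j = i then complex_of_real lam else 0) * X j i) = (\<Sum>i<n. complex_of_real lam * X i i)"
    by (rule sum.cong[OF refl]) (rule sum_delta_c, simp)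
  also have "(\<Sum>i<n. \<Sum>j<n. \<Sum>l<d. complex_of_real (b l) * (cnj (A l j i) * X j i)) = (\<Sum>l<d. complex_of_real (b l) * frob n (A l) X)"
    unfolding frob_def by (subst swap3) (simp add: sum_distrib_left)
  finally show ?thesis unfolding mtrace_def by (simp add: sum_distrib_left)
qed

lemma psd_Mlin:
  assumes K: "Kok K" and A: "\<forall>i<d. psd K n (A i)" and nn: "\<forall>x\<in>Kvec K n. Re (qform n (Mlin d lam b A) x) \<ge> 0"
  shows "psd K n (Mlin d lam b A)"
  unfolding psd_def
proof (intro conjI)
  show "Kmat K n (Mlin d lam b A)" unfolding Kmat_def Mlin_def
  proof (intro allI impI)
    fix i j assume "i < n" "j < n"
    then have "\<forall>l<d. A l i j \<in> K" using A unfolding psd_def Kmat_def by auto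
    then show "(if i = j then complex_of_real lam else 0) - (\<Sum>l<d. complex_of_real (b l) * A l i j) \<in> K"
      using K by (intro K_diff K_sum K_mult K_real) auto
  qed
  show "hermitian n (Mlin d lam b A)" unfolding hermitian_def Mlin_def
  proof (intro allI impI)
    fix i j assume "i < n" "j < n"
    then have "\<forall>l<d. A l j i = cnj (A l i j)" using A unfolding psd_def using herm_at by blast
    then show "(if j = i then complex_of_real lam else 0) - (\<Sum>l<d. complex_of_real (b l) * A l j i) =
      cnj ((if i = j then complex_of_real lam else 0) - (\<Sum>l<d. complex_of_real (b l) * A l i j))"
      by (auto simp: cnj_sum intro!: sum.cong)
  qed
qed (use nn in auto)

lemma weak_duality:
  assumes K: "Kok K" and d: "d \<ge> 1" and A: "\<forall>i<d. psd K n (A i)"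
    and b: "\<forall>i<d. b i > 0" and pb: "(\<Prod>i<d. b i) \<ge> 1"
    and nn: "\<forall>x\<in>Kvec K n. lam * vnorm2 n x - (1 / real d) * (\<Sum>i<d. b i * Re (qform n (A i) x)) \<ge> 0"
    and X: "psd K n X" "mtrace n X = 1"
  shows "root d (\<Prod>i<d. Re (frob n (A i) X)) \<le> lam"
proof -
  define M where "M = Mlin d lam (\<lambda>i. b i / real d) A"
  have qM: "Re (qform n M x) = lam * vnorm2 n x - (1 / real d) * (\<Sum>i<d. b i * Re (qform n (A i) x))" for x
    unfolding M_def qform_Mlin by (simp add: Re_sum sum_distrib_left)
  have PM: "psd K n M" unfolding M_def by (rule psd_Mlin[OF K A]) (use nn qM M_def in auto)
  have fM: "Re (frob n M X) = lam - (\<Sum>i<d. b i / real d * Re (frob n (A i) X))"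
    unfolding M_def frob_Mlin using X by (simp add: Re_sum)
  have t0: "\<forall>i<d. Re (frob n (A i) X) \<ge> 0" using frob_psd_nonneg[OF K _ X(1)] A by auto
  have s: "(\<Sum>i<d. b i * Re (frob n (A i) X)) / real d \<le> lam"
    using frob_psd_nonneg[OF K PM X(1)] fM by (simp add: sum_divide_distrib)
  have "root d (\<Prod>i<d. b i * Re (frob n (A i) X)) \<le> (\<Sum>i<d. b i * Re (frob n (A i) X)) / real d"
    using t0 b d by (intro real_amgm_root) auto
  moreover have "(\<Prod>i<d. Re (frob n (A i) X)) \<le> (\<Prod>i<d. b i * Re (frob n (A i) X))"
  proof -
    have "(\<Prod>i<d. Re (frob n (A i) X)) \<ge> 0" using t0 by (intro prod_nonneg) auto
    then have "(\<Prod>i<d. Re (frob n (A i) X)) \<le> (\<Prod>i<d. b i) * (\<Prod>i<d. Re (frob n (A i) X))"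
      using pb by (simp add: mult_le_cancel_right1)
    then show ?thesis by (simp add: prod.distrib)
  qed
  then have "root d (\<Prod>i<d. Re (frob n (A i) X)) \<le> root d (\<Prod>i<d. b i * Re (frob n (A i) X))"
    using d by (simp add: real_root_le_iff)
  ultimately show ?thesis using s by linarith
qed

lemma vnorm2_sos: "sos K n (\<lambda>x. vnorm2 n x)"
proof -
  have "sos K n (\<lambda>x. \<Sum>j<n. (Re (x j))^2 + (Im (x j))^2)"
    by (intro sos_sum sos_add sos_sq realpoly.re realpoly.im) auto
  then show ?thesis by (rule sos_ext) (simp add: vnorm2_def cmod_power2)
qed

lemma sos_d_certificate:
  assumes K: "Kok K" and d: "d \<ge> 1" and A: "\<forall>i<d. psd K n (A i)" and V: "V \<ge> 0"
    and b: "\<forall>i<d. b i > 0"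
    and g: "sos K n (\<lambda>x. V * vnorm2 n x - (1 / real d) * (\<Sum>i<d. b i * Re (qform n (A i) x)))"
  shows "sos K n (\<lambda>x. V^d * vnorm2 n x ^ d - (\<Prod>i<d. b i) * (\<Prod>i<d. Re (qform n (A i) x)))"
proof -
  let ?C = "{f. sos K n f}"
  have C: "cone ?C" by (rule sos_cone)
  define y where "y i x = b i * Re (qform n (A i) x)" for i x
  have yC: "y i \<in> ?C" if "i < d" for i
    unfolding y_def using b that psd_sos[OF K, of n "A i"] A cone_scale[OF C, of "b i"] by auto
  define S where "S x = (1 / real d) * (\<Sum>i<d. y i x)" for x
  have SC: "S \<in> ?C" unfolding S_def[abs_def] by (intro cone_scale[OF C] cone_sum[OF C] yC) auto
  define P where "P x = V * vnorm2 n x" for x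
  have PC: "P \<in> ?C" unfolding P_def[abs_def] using cone_scale[OF C V] vnorm2_sos by auto
  have PS: "(\<lambda>x. P x - S x) \<in> ?C" using g unfolding P_def S_def y_def by simp
  have 1: "(\<lambda>x. P x ^ d - S x ^ d) \<in> ?C" by (rule cone_diff_pow[OF C PC SC PS])
  have 2: "(\<lambda>x. (1 / real d ^ d) * ((\<Sum>i<d. y i x)^d - real d^d * (\<Prod>i<d. y i x))) \<in> ?C"
    by (intro cone_scale[OF C] cone_amgm[OF C] yC) auto
  have "(\<lambda>x. (P x ^ d - S x ^ d) + (1 / real d ^ d) * ((\<Sum>i<d. y i x)^d - real d^d * (\<Prod>i<d. y i x)))
     \<in> ?C" by (rule cone_add[OF C 1 2])
  moreover have "(P x ^ d - S x ^ d) + (1 / real d ^ d) * ((\<Sum>i<d. y i x)^d - real d^d * (\<Prod>i<d. y i x))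
     = V^d * vnorm2 n x ^ d - (\<Prod>i<d. b i) * (\<Prod>i<d. Re (qform n (A i) x))" for x
  proof -
    have "S x ^ d = (1 / real d ^ d) * (\<Sum>i<d. y i x)^d" unfolding S_def by (simp add: power_mult_distrib power_divide)
    moreover have "(\<Prod>i<d. y i x) = (\<Prod>i<d. b i) * (\<Prod>i<d. Re (qform n (A i) x))" unfolding y_def by (simp add: prod.distrib)
    moreover have "real d ^ d \<noteq> 0" using d by simp
    ultimately show ?thesis unfolding P_def by (simp add: power_mult_distrib right_diff_distrib)
  qed
  ultimately show ?thesis by simp
qed

lemma subsetsK_1: "subsetsK d 1 = (\<lambda>i. {i}) ` {..<d}"
  unfolding subsetsK_def by (auto simp: card_1_singleton_iff)

lemma subsetsK_d: "subsetsK d d = {{..<d}}"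
proof -
  have "I = {..<d}" if "I \<subseteq> {..<d}" "card I = d" for I
    using card_subset_eq[of "{..<d}" I] that by auto
  then show ?thesis unfolding subsetsK_def by auto
qed

lemma qform_bound:
  "Re (qform n M x) \<le> (\<Sum>a<n. \<Sum>b<n. cmod (M a b)) * vnorm2 n x"
proof -
  have xb: "cmod (x a) * cmod (x b) \<le> vnorm2 n x" if "a < n" "b < n" for a b
  proof -
    have "(cmod (x a))^2 \<le> vnorm2 n x" "(cmod (x b))^2 \<le> vnorm2 n x"
      unfolding vnorm2_def using that by (auto intro!: member_le_sum)
    then show ?thesis using sum_squares_bound[of "cmod (x a)" "cmod (x b)"]
      by linarith
  qed
  have "Re (qform n M x) \<le> cmod (qform n M x)" by (rule complex_Re_le_cmod)
  also have "\<dots> \<le> (\<Sum>a<n. \<Sum>b<n. cmod (cnj (x a) * M a b * x b))"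
    unfolding qform_def by (rule order_trans[OF norm_sum sum_mono]) (rule norm_sum)
  also have "\<dots> \<le> (\<Sum>a<n. \<Sum>b<n. cmod (M a b) * vnorm2 n x)"
  proof (intro sum_mono)
    fix a b assume "a \<in> {..<n}" "b \<in> {..<n}"
    then have "cmod (x a) * cmod (x b) \<le> vnorm2 n x" using xb by auto
    then show "cmod (cnj (x a) * M a b * x b) \<le> cmod (M a b) * vnorm2 n x"
      by (simp add: norm_mult) (metis mult.commute mult.left_commute mult_left_mono norm_ge_zero)
  qed
  also have "\<dots> = (\<Sum>a<n. \<Sum>b<n. cmod (M a b)) * vnorm2 n x" by (simp add: sum_distrib_right)
  finally show ?thesis .
qed

lemma subseq_converge:
  fixes f :: "nat \<Rightarrow> 'p \<Rightarrow> complex"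
  assumes "finite P" and B: "\<And>m p. p \<in> P \<Longrightarrow> cmod (f m p) \<le> B"
  shows "\<exists>r. strict_mono r \<and> (\<forall>p\<in>P. convergent (\<lambda>m. f (r m) p))"
  using assms(1) B
proof (induction P rule: finite_induct)
  case empty then show ?case by (intro exI[of _ id]) (auto simp: strict_mono_def)
next
  case (insert q P)
  obtain r where r: "strict_mono r" "\<forall>p\<in>P. convergent (\<lambda>m. f (r m) p)" using insert by auto
  have "bounded (range (\<lambda>m. f (r m) q))" using insert.prems unfolding bounded_iff by auto
  then obtain l r2 where r2: "strict_mono r2" "((\<lambda>m. f (r m) q) \<circ> r2) \<longlonglongrightarrow> l"
    using bounded_imp_convergent_subsequence by blast
  show ?case
  proof (intro exI[of _ "r \<circ> r2"] conjI ballI)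
    show "strict_mono (r \<circ> r2)" using r(1) r2(1) by (rule strict_mono_o)
    fix p assume "p \<in> insert q P"
    then show "convergent (\<lambda>m. f ((r \<circ> r2) m) p)"
    proof
      assume "p = q" then show ?thesis using r2(2) unfolding convergent_def comp_def by auto
    next
      assume "p \<in> P"
      then obtain L where "(\<lambda>m. f (r m) p) \<longlonglongrightarrow> L" using r(2) convergent_def by blast
      then have "((\<lambda>m. f (r m) p) \<circ> r2) \<longlonglongrightarrow> L" using r2(1) by (rule LIMSEQ_subseq_LIMSEQ)
      then show ?thesis unfolding convergent_def comp_def by auto
    qed
  qed
qed

lemma psd_entry_bound:
  assumes K: "Kok K" and P: "psd K n X" and tr: "mtrace n X = 1" and i: "i < n" and j: "j < n"
  shows "cmod (X i j) \<le> 1"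
proof -
  obtain u where u: "\<forall>i<n. \<forall>j<n. X i j = (\<Sum>k<n. cnj (u k i) * u k j)" using ldl[OF K P] by blast
  have diag: "Re (X a a) = (\<Sum>k<n. (cmod (u k a))^2)" if "a < n" for a
    using u that by (simp only: Re_sum Re_cnj_mult_self cmod_power2)
  have dn: "Re (X a a) \<ge> 0" if "a < n" for a using diag[OF that] by (simp add: sum_nonneg)
  have tr1: "(\<Sum>a<n. Re (X a a)) = 1" using tr unfolding mtrace_def by (metis Re_sum one_complex.sel)
  have dle: "Re (X a a) \<le> 1" if "a < n" for a
  proof -
    have "Re (X a a) \<le> (\<Sum>a<n. Re (X a a))" using that dn by (intro member_le_sum) auto
    then show ?thesis using tr1 by simp
  qed
  have "cmod (X i j) \<le> (\<Sum>k<n. cmod (u k i) * cmod (u k j))"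
  proof -
    have "cmod (X i j) = cmod (\<Sum>k<n. cnj (u k i) * u k j)" using u i j by simp
    also have "\<dots> \<le> (\<Sum>k<n. cmod (cnj (u k i) * u k j))" by (rule norm_sum)
    also have "\<dots> = (\<Sum>k<n. cmod (u k i) * cmod (u k j))" by (simp add: norm_mult)
    finally show ?thesis .
  qed
  also have "\<dots> \<le> (\<Sum>k<n. ((cmod (u k i))^2 + (cmod (u k j))^2) / 2)"
  proof (rule sum_mono)
    fix k
    show "cmod (u k i) * cmod (u k j) \<le> ((cmod (u k i))^2 + (cmod (u k j))^2) / 2"
      using sum_squares_bound[of "cmod (u k i)" "cmod (u k j)"] by (simp add: field_simps)
  qed
  also have "\<dots> = (Re (X i i) + Re (X j j)) / 2" using diag i j by (simp add: sum.distrib flip: sum_divide_distrib)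
  also have "\<dots> \<le> 1" using dle[OF i] dle[OF j] by simp
  finally show ?thesis .
qed

lemma tendsto_qform: "(\<And>i j. i < n \<Longrightarrow> j < n \<Longrightarrow> (\<lambda>m. Y m i j) \<longlonglongrightarrow> Z i j) \<Longrightarrow> (\<lambda>m. qform n (Y m) x) \<longlonglongrightarrow> qform n Z x"
  unfolding qform_def by (intro tendsto_sum; rule tendsto_mult_right, rule tendsto_mult_left) auto

lemma tendsto_frob: "(\<And>i j. i < n \<Longrightarrow> j < n \<Longrightarrow> (\<lambda>m. Y m i j) \<longlonglongrightarrow> Z i j) \<Longrightarrow> (\<lambda>m. frob n A (Y m)) \<longlonglongrightarrow> frob n A Z"
  unfolding frob_def by (intro tendsto_sum; rule tendsto_mult_left) auto

lemma tendsto_mtrace: "(\<And>i j. i < n \<Longrightarrow> j < n \<Longrightarrow> (\<lambda>m. Y m i j) \<longlonglongrightarrow> Z i j) \<Longrightarrow> (\<lambda>m. mtrace n (Y m)) \<longlonglongrightarrow> mtrace n Z"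
  unfolding mtrace_def by (intro tendsto_sum) auto

lemma psd_limit:
  assumes K: "Kok K" and P: "\<And>m. psd K n (Y m)" and tr: "\<And>m. mtrace n (Y m) = 1"
    and lim: "\<And>i j. i < n \<Longrightarrow> j < n \<Longrightarrow> (\<lambda>m. Y m i j) \<longlonglongrightarrow> Z i j"
  shows "psd K n Z \<and> mtrace n Z = 1"
proof (intro conjI)
  have "(\<lambda>m. mtrace n (Y m)) \<longlonglongrightarrow> mtrace n Z" by (rule tendsto_mtrace[OF lim])
  then have "(\<lambda>m. 1) \<longlonglongrightarrow> mtrace n Z" using tr by simp
  then show "mtrace n Z = 1" using LIMSEQ_unique[OF _ tendsto_const] by blast
  show "psd K n Z" unfolding psd_def
  proof (intro conjI ballI)
    show "Kmat K n Z" unfolding Kmat_def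
    proof (intro allI impI)
      fix i j assume ij: "i < n" "j < n"
      show "Z i j \<in> K" using K
      proof
        assume KR: "K = \<real>"
        have "\<forall>m. Im (Y m i j) = 0"
        proof
          fix m have "Kmat K n (Y m)" using P[of m] unfolding psd_def by blast
          then show "Im (Y m i j) = 0" using ij KR unfolding Kmat_def by (auto simp: complex_is_Real_iff)
        qed
        then have "(\<lambda>m. Im (Y m i j)) \<longlonglongrightarrow> 0" by simp
        moreover have "(\<lambda>m. Im (Y m i j)) \<longlonglongrightarrow> Im (Z i j)" by (intro tendsto_Im lim ij)
        ultimately have "Im (Z i j) = 0" using LIMSEQ_unique by blast
        then show ?thesis using KR by (simp add: complex_is_Real_iff)
      qed auto
    qed
    show "hermitian n Z" unfolding hermitian_def
    proof (intro allI impI)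
      fix i j assume ij: "i < n" "j < n"
      have "\<forall>m. Y m j i = cnj (Y m i j)"
      proof
        fix m have "hermitian n (Y m)" using P[of m] unfolding psd_def by blast
        then show "Y m j i = cnj (Y m i j)" using herm_at ij by blast
      qed
      then have "(\<lambda>m. Y m j i) \<longlonglongrightarrow> cnj (Z i j)" using tendsto_cnj[OF lim[OF ij]] by simp
      then show "Z j i = cnj (Z i j)" using lim[of j i] ij LIMSEQ_unique by blast
    qed
    fix x assume x: "x \<in> Kvec K n"
    have "(\<lambda>m. Re (qform n (Y m) x)) \<longlonglongrightarrow> Re (qform n Z x)" by (intro tendsto_Re tendsto_qform lim)
    moreover have "\<forall>m. Re (qform n (Y m) x) \<ge> 0" using P x unfolding psd_def by blast
    ultimately show "0 \<le> Re (qform n Z x)" by (intro LIMSEQ_le_const) auto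
  qed
qed

definition mcomb :: "'l set \<Rightarrow> ('l \<Rightarrow> real) \<Rightarrow> ('l \<Rightarrow> nat \<Rightarrow> nat \<Rightarrow> complex) \<Rightarrow> nat \<Rightarrow> nat \<Rightarrow> complex" where
  "mcomb I c W i j = (\<Sum>l\<in>I. complex_of_real (c l) * W l i j)"

lemma qform_mcomb: "qform n (mcomb I c W) x = (\<Sum>l\<in>I. complex_of_real (c l) * qform n (W l) x)"
proof -
  have "qform n (mcomb I c W) x = (\<Sum>i<n. \<Sum>j<n. \<Sum>l\<in>I. complex_of_real (c l) * (cnj (x i) * W l i j * x j))"
    unfolding qform_def mcomb_def by (simp add: sum_distrib_left sum_distrib_right algebra_simps)
  also have "\<dots> = (\<Sum>l\<in>I. \<Sum>i<n. \<Sum>j<n. complex_of_real (c l) * (cnj (x i) * W l i j * x j))" by (rule swap3)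
  also have "\<dots> = (\<Sum>l\<in>I. complex_of_real (c l) * qform n (W l) x)" unfolding qform_def by (simp add: sum_distrib_left)
  finally show ?thesis .
qed

lemma frob_mcomb: "frob n A (mcomb I c W) = (\<Sum>l\<in>I. complex_of_real (c l) * frob n A (W l))"
proof -
  have "frob n A (mcomb I c W) = (\<Sum>i<n. \<Sum>j<n. \<Sum>l\<in>I. complex_of_real (c l) * (cnj (A j i) * W l j i))"
    unfolding frob_def mcomb_def by (simp add: sum_distrib_left algebra_simps)
  also have "\<dots> = (\<Sum>l\<in>I. \<Sum>i<n. \<Sum>j<n. complex_of_real (c l) * (cnj (A j i) * W l j i))" by (rule swap3)
  also have "\<dots> = (\<Sum>l\<in>I. complex_of_real (c l) * frob n A (W l))" unfolding frob_def by (simp add: sum_distrib_left)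
  finally show ?thesis .
qed

lemma mtrace_mcomb: "mtrace n (mcomb I c W) = (\<Sum>l\<in>I. complex_of_real (c l) * mtrace n (W l))"
  unfolding mtrace_def mcomb_def by (subst sum.swap) (simp add: sum_distrib_left)

lemma psd_mcomb:
  assumes K: "Kok K" and W: "\<And>l. l \<in> I \<Longrightarrow> psd K n (W l)" and c: "\<And>l. l \<in> I \<Longrightarrow> c l \<ge> 0"
  shows "psd K n (mcomb I c W)"
  unfolding psd_def
proof (intro conjI ballI)
  show "Kmat K n (mcomb I c W)" unfolding Kmat_def mcomb_def
  proof (intro allI impI)
    fix i j assume ij: "i < n" "j < n"
    have "\<forall>l\<in>I. W l i j \<in> K"
    proof
      fix l assume "l \<in> I" then have "Kmat K n (W l)" using W unfolding psd_def by blast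
      then show "W l i j \<in> K" using ij unfolding Kmat_def by blast
    qed
    then show "(\<Sum>l\<in>I. complex_of_real (c l) * W l i j) \<in> K" using K by (intro K_sum K_mult K_real) auto
  qed
  show "hermitian n (mcomb I c W)" unfolding hermitian_def mcomb_def
  proof (intro allI impI)
    fix i j assume ij: "i < n" "j < n"
    have "\<forall>l\<in>I. W l j i = cnj (W l i j)"
    proof
      fix l assume "l \<in> I" then have "hermitian n (W l)" using W unfolding psd_def by blast
      then show "W l j i = cnj (W l i j)" using ij herm_at by blast
    qed
    then show "(\<Sum>l\<in>I. complex_of_real (c l) * W l j i) = cnj (\<Sum>l\<in>I. complex_of_real (c l) * W l i j)"
      by (auto simp: cnj_sum intro!: sum.cong)
  qed
  fix x assume x: "x \<in> Kvec K n"
  have "\<forall>l\<in>I. Re (qform n (W l) x) \<ge> 0" using W x unfolding psd_def by blast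
  then show "0 \<le> Re (qform n (mcomb I c W) x)" unfolding qform_mcomb Re_sum
    using c by (intro sum_nonneg) (simp add: mult_nonneg_nonneg)
qed

definition rk1 :: "(nat \<Rightarrow> complex) \<Rightarrow> nat \<Rightarrow> nat \<Rightarrow> complex" where
  "rk1 v i j = v i * cnj (v j)"

lemma qform_rk1: "qform n (rk1 v) x = cnj (\<Sum>j<n. cnj (v j) * x j) * (\<Sum>j<n. cnj (v j) * x j)"
  unfolding qform_def rk1_def by (simp only: cnj_sum sum_product) (simp add: algebra_simps)

lemma psd_rk1: assumes K: "Kok K" and v: "v \<in> Kvec K n" shows "psd K n (rk1 v)"
  unfolding psd_def
proof (intro conjI ballI)
  show "Kmat K n (rk1 v)" using v K unfolding Kmat_def Kvec_def rk1_def by (auto intro: K_mult K_cnj)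
  show "hermitian n (rk1 v)" unfolding hermitian_def rk1_def by (simp add: mult.commute)
  fix x show "0 \<le> Re (qform n (rk1 v) x)" unfolding qform_rk1 Re_cnj_mult_self by simp
qed

lemma mtrace_rk1: "mtrace n (rk1 v) = complex_of_real (vnorm2 n v)"
  unfolding mtrace_def rk1_def vnorm2_def by (simp add: complex_norm_square flip: of_real_power)

lemma frob_rk1: assumes H: "hermitian n A" shows "frob n A (rk1 v) = qform n A v"
  unfolding frob_def qform_def rk1_def
proof (intro sum.cong refl)
  fix i j assume "i \<in> {..<n}" "j \<in> {..<n}"
  then have "cnj (A j i) = A i j" using herm_at[OF H, of i j] by simp
  then show "cnj (A j i) * (v j * cnj (v i)) = cnj (v i) * A i j * v j" by (simp add: algebra_simps)
qed

lemma qform_scale: "qform n M (\<lambda>j. c * x j) = (cnj c * c) * qform n M x"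
  unfolding qform_def by (simp add: sum_distrib_left algebra_simps)

lemma first_order:
  fixes t a :: "nat \<Rightarrow> real"
  assumes t: "\<And>i. i < d \<Longrightarrow> t i > 0"
    and le: "\<And>s. 0 \<le> s \<Longrightarrow> s \<le> 1 \<Longrightarrow> (\<Prod>i<d. (1 - s) * t i + s * a i) \<le> (\<Prod>i<d. t i)"
  shows "(\<Sum>i<d. a i / t i) \<le> real d"
proof (rule ccontr)
  assume "\<not> ?thesis"
  then have gt: "(\<Sum>i<d. a i / t i) - real d > 0" by simp
  define phi where "phi s = (\<Prod>i<d. (1 - s) * t i + s * a i)" for s
  define D where "D = (\<Sum>i<d. (a i - t i) * (\<Prod>j\<in>{..<d} - {i}. t j))"
  have "(phi has_derivative (\<lambda>h. \<Sum>i<d. h * (a i - t i) * (\<Prod>j\<in>{..<d} - {i}. (1 - 0) * t j + 0 * a j))) (at 0)"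
    unfolding phi_def
    by (rule has_derivative_prod) (auto intro!: derivative_eq_intros simp: algebra_simps)
  then have "(phi has_field_derivative D) (at 0)"
    unfolding has_field_derivative_def D_def
    by (rule has_derivative_eq_rhs) (auto simp: fun_eq_iff sum_distrib_left algebra_simps)
  moreover have "D = (\<Prod>i<d. t i) * ((\<Sum>i<d. a i / t i) - real d)"
  proof -
    have "(\<Prod>j\<in>{..<d} - {i}. t j) = (\<Prod>i<d. t i) / t i" if "i < d" for i
      using prod.remove[of "{..<d}" i t] that t[OF that] by simp
    then have "D = (\<Sum>i<d. (a i - t i) * ((\<Prod>i<d. t i) / t i))" unfolding D_def by (intro sum.cong) auto
    also have "\<dots> = (\<Prod>i<d. t i) * (\<Sum>i<d. a i / t i - 1)"
      unfolding sum_distrib_left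
    proof (intro sum.cong refl)
      fix i assume "i \<in> {..<d}"
      then have "t i > 0" using t by auto
      then show "(a i - t i) * (prod t {..<d} / t i) = prod t {..<d} * (a i / t i - 1)"
        by (simp add: field_simps)
    qed
    finally show ?thesis by (simp add: sum_subtractf)
  qed
  moreover have "(\<Prod>i<d. t i) > 0" using t by (intro prod_pos) auto
  ultimately have "D > 0" using gt by simp
  then obtain e where e: "e > 0" "\<forall>h>0. h < e \<longrightarrow> phi 0 < phi (0 + h)"
    using DERIV_pos_inc_right[OF \<open>(phi has_field_derivative D) (at 0)\<close>] by blast
  define h where "h = min (e/2) 1"
  have "phi 0 < phi h" using e unfolding h_def by auto
  moreover have "phi h \<le> phi 0" unfolding phi_def using le[of h] e unfolding h_def by auto
  ultimately show False by simp
qed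

lemma exists_maximizer:
  fixes A :: "nat \<Rightarrow> nat \<Rightarrow> nat \<Rightarrow> complex" and n d :: nat and K :: "complex set"
    and F :: "(nat \<Rightarrow> nat \<Rightarrow> complex) \<Rightarrow> real"
  defines "F \<equiv> \<lambda>X. root d (\<Prod>i<d. Re (frob n (A i) X))"
  assumes K: "Kok K"
    and ne: "{F X | X. psd K n X \<and> mtrace n X = 1} \<noteq> {}"
    and bdd: "bdd_above {F X | X. psd K n X \<and> mtrace n X = 1}"
  shows "\<exists>X. psd K n X \<and> mtrace n X = 1 \<and> F X = Sup {F X | X. psd K n X \<and> mtrace n X = 1}"
proof -
  define S where "S = {F X | X. psd K n X \<and> mtrace n X = 1}"
  have "\<forall>m. \<exists>X. psd K n X \<and> mtrace n X = 1 \<and> Sup S - inverse (real (Suc m)) < F X"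
  proof
    fix m
    have "Sup S - inverse (real (Suc m)) < Sup S" by simp
    then obtain y where "y \<in> S" "Sup S - inverse (real (Suc m)) < y"
      using less_cSupE[of _ S] ne S_def by blast
    then show "\<exists>X. psd K n X \<and> mtrace n X = 1 \<and> Sup S - inverse (real (Suc m)) < F X"
      unfolding S_def by blast
  qed
  then obtain Xs where Xs: "\<And>m. psd K n (Xs m)" "\<And>m. mtrace n (Xs m) = 1"
    "\<And>m. Sup S - inverse (real (Suc m)) < F (Xs m)" by metis
  have "\<exists>r. strict_mono r \<and> (\<forall>p\<in>{..<n} \<times> {..<n}. convergent (\<lambda>m. Xs (r m) (fst p) (snd p)))"
    by (rule subseq_converge[where B=1]) (use psd_entry_bound[OF K Xs(1) Xs(2)] in auto)
  then obtain r where r: "strict_mono r" and conv: "\<And>i j. i < n \<Longrightarrow> j < n \<Longrightarrow> convergent (\<lambda>m. Xs (r m) i j)"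
    by force
  define Z where "Z i j = lim (\<lambda>m. Xs (r m) i j)" for i j
  have lim: "(\<lambda>m. Xs (r m) i j) \<longlonglongrightarrow> Z i j" if "i < n" "j < n" for i j
    using conv[OF that] unfolding Z_def convergent_LIMSEQ_iff .
  have Zf: "psd K n Z \<and> mtrace n Z = 1" by (rule psd_limit[OF K Xs(1) Xs(2) lim])
  have FZ: "(\<lambda>m. F (Xs (r m))) \<longlonglongrightarrow> F Z"
    unfolding F_def by (intro tendsto_real_root tendsto_prod tendsto_Re tendsto_frob lim)
  have up: "F Z \<le> Sup S" using Zf bdd unfolding S_def by (intro cSup_upper) auto
  have low: "Sup S \<le> F Z"
  proof (rule LIMSEQ_le)
    show "(\<lambda>m. Sup S - inverse (real (Suc m))) \<longlonglongrightarrow> Sup S"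
      using tendsto_diff[OF tendsto_const LIMSEQ_inverse_real_of_nat] by simp
    show "(\<lambda>m. F (Xs (r m))) \<longlonglongrightarrow> F Z" by (rule FZ)
    show "\<exists>N. \<forall>m\<ge>N. Sup S - inverse (real (Suc m)) \<le> F (Xs (r m))"
    proof (intro exI allI impI)
      fix m
      have "m \<le> r m" using seq_suble[OF r] .
      then have "inverse (real (Suc (r m))) \<le> inverse (real (Suc m))"
        by (intro le_imp_inverse_le) auto
      then show "Sup S - inverse (real (Suc m)) \<le> F (Xs (r m))" using Xs(3)[of "r m"] by linarith
    qed
  qed
  show ?thesis using Zf up low unfolding S_def by (intro exI[of _ Z]) auto
qed

lemma vnorm2_nonneg: "vnorm2 n x \<ge> 0" unfolding vnorm2_def by (simp add: sum_nonneg)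

lemma vnorm2_scale: "vnorm2 n (\<lambda>j. c * x j) = (cmod c)^2 * vnorm2 n x"
  unfolding vnorm2_def by (simp add: norm_mult power_mult_distrib sum_distrib_left)

lemma vnorm2_zero: assumes "vnorm2 n x = 0" shows "qform n M x = 0"
proof -
  have "\<forall>j\<in>{..<n}. (cmod (x j))^2 = 0" using assms unfolding vnorm2_def
    by (subst sum_nonneg_eq_0_iff[symmetric]) auto
  then have "\<forall>j<n. x j = 0" by auto
  then have "qform n M x = qform n M (\<lambda>_. 0)" by (intro qform_cong) auto
  then show ?thesis by (simp add: qform_def)
qed

lemma normalize:
  assumes K: "Kok K" and x: "x \<in> Kvec K n" and N: "vnorm2 n x > 0"
  shows "\<exists>v\<in>Kvec K n. vnorm2 n v = 1 \<and> (\<forall>M. qform n M v = complex_of_real (1 / vnorm2 n x) * qform n M x)"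
proof -
  define c where "c = complex_of_real (1 / sqrt (vnorm2 n x))"
  have cc: "cnj c * c = complex_of_real (1 / vnorm2 n x)" unfolding c_def using N
    by (simp flip: of_real_mult)
  have cm: "(cmod c)^2 = 1 / vnorm2 n x" unfolding c_def using N
    by (simp only: norm_of_real) (simp add: power_divide)
  show ?thesis
  proof (intro bexI[of _ "\<lambda>j. c * x j"] conjI allI)
    show "(\<lambda>j. c * x j) \<in> Kvec K n" using x K unfolding Kvec_def c_def by (auto intro: K_mult)
    show "vnorm2 n (\<lambda>j. c * x j) = 1" unfolding vnorm2_scale cm using N by simp
    fix M show "qform n M (\<lambda>j. c * x j) = complex_of_real (1 / vnorm2 n x) * qform n M x"
      unfolding qform_scale cc ..
  qed
qed

lemma pos_cert:
  assumes K: "Kok K" and d: "d \<ge> 1" and A: "\<forall>i<d. psd K n (A i)"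
    and X: "psd K n X" "mtrace n X = 1"
    and t: "\<forall>i<d. Re (frob n (A i) X) > 0"
    and mx: "\<forall>Y. psd K n Y \<and> mtrace n Y = 1 \<longrightarrow> (\<Prod>i<d. Re (frob n (A i) Y)) \<le> (\<Prod>i<d. Re (frob n (A i) X))"
    and V: "V \<ge> 0"
  shows "\<forall>x\<in>Kvec K n. V * vnorm2 n x - (1 / real d) * (\<Sum>i<d. (V / Re (frob n (A i) X)) * Re (qform n (A i) x)) \<ge> 0"
proof
  fix x assume x: "x \<in> Kvec K n"
  define T where "T i = Re (frob n (A i) X)" for i
  have HA: "hermitian n (A i)" if "i < d" for i using A that unfolding psd_def by blast
  show "V * vnorm2 n x - (1 / real d) * (\<Sum>i<d. (V / Re (frob n (A i) X)) * Re (qform n (A i) x)) \<ge> 0"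
  proof (cases "vnorm2 n x = 0")
    case True
    then show ?thesis using vnorm2_zero[OF True] by simp
  next
    case False
    then have N: "vnorm2 n x > 0" using vnorm2_nonneg[of n x] by simp
    obtain v where v: "v \<in> Kvec K n" "vnorm2 n v = 1"
      and vq: "\<And>M. qform n M v = complex_of_real (1 / vnorm2 n x) * qform n M x"
      using normalize[OF K x N] by blast
    define a where "a i = Re (qform n (A i) v)" for i
    have first: "(\<Sum>i<d. a i / T i) \<le> real d"
    proof (rule first_order)
      show "\<And>i. i < d \<Longrightarrow> T i > 0" using t T_def by auto
      fix s :: real assume s: "0 \<le> s" "s \<le> 1"
      define Y where "Y = mcomb {0::nat, 1} (\<lambda>l. if l = 0 then 1 - s else s) (\<lambda>l. if l = 0 then X else rk1 v)"
      have PY: "psd K n Y" unfolding Y_def using s X psd_rk1[OF K v(1)] by (intro psd_mcomb[OF K]) auto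
      have TY: "mtrace n Y = 1" unfolding Y_def mtrace_mcomb using X mtrace_rk1[of n v] v
        by (simp flip: of_real_add)
      have "Re (frob n (A i) Y) = (1 - s) * T i + s * a i" if "i < d" for i
        unfolding Y_def frob_mcomb T_def a_def using frob_rk1[OF HA[OF that]] by simp
      then have "(\<Prod>i<d. (1 - s) * T i + s * a i) = (\<Prod>i<d. Re (frob n (A i) Y))" by (intro prod.cong) auto
      also have "\<dots> \<le> (\<Prod>i<d. T i)" using mx PY TY unfolding T_def by blast
      finally show "(\<Prod>i<d. (1 - s) * T i + s * a i) \<le> (\<Prod>i<d. T i)" .
    qed
    have aq: "Re (qform n (A i) x) = vnorm2 n x * a i" for i
      unfolding a_def vq using N by simp
    have "(1 / real d) * (\<Sum>i<d. (V / T i) * Re (qform n (A i) x)) = (V * vnorm2 n x / real d) * (\<Sum>i<d. a i / T i)"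
      unfolding aq by (simp add: sum_distrib_left algebra_simps)
    also have "\<dots> \<le> (V * vnorm2 n x / real d) * real d"
      using first V N d by (intro mult_left_mono) auto
    also have "\<dots> = V * vnorm2 n x" using d by simp
    finally show ?thesis unfolding T_def by simp
  qed
qed

lemma zero_cert:
  assumes K: "Kok K" and d: "d \<ge> 1" and A: "\<forall>i<d. psd K n (A i)"
    and i0: "i0 < d" and z: "\<forall>x\<in>Kvec K n. Re (qform n (A i0) x) = 0" and e: "\<epsilon> > 0"
  shows "\<exists>V \<alpha>. 0 \<le> V \<and> V \<le> \<epsilon> \<and> (\<forall>i<d. \<alpha> i > 0) \<and> (\<Prod>i<d. \<alpha> i) = 1 \<and>
     (\<forall>x\<in>Kvec K n. V * vnorm2 n x - (1 / real d) * (\<Sum>i<d. \<alpha> i * Re (qform n (A i) x)) \<ge> 0)"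
proof -
  define C where "C = (\<Sum>i<d. \<Sum>a<n. \<Sum>b<n. cmod (A i a b))"
  have C0: "C \<ge> 0" unfolding C_def by (simp add: sum_nonneg)
  define \<delta> where "\<delta> = \<epsilon> / (C + 1)"
  have \<delta>0: "\<delta> > 0" unfolding \<delta>_def using e C0 by simp
  define \<alpha> where "\<alpha> i = (if i = i0 then 1 / \<delta>^(d-1) else \<delta>)" for i
  show ?thesis
  proof (intro exI[of _ "\<delta> * C"] exI[of _ \<alpha>] conjI ballI allI impI)
    show "0 \<le> \<delta> * C" using \<delta>0 C0 by simp
    show "\<delta> * C \<le> \<epsilon>" unfolding \<delta>_def using e C0 by (simp add: field_simps)
    show "\<And>i. i < d \<Longrightarrow> \<alpha> i > 0" unfolding \<alpha>_def using \<delta>0 by simp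
    have "(\<Prod>i<d. \<alpha> i) = \<alpha> i0 * (\<Prod>i\<in>{..<d} - {i0}. \<alpha> i)" using i0 by (simp add: prod.remove)
    also have "(\<Prod>i\<in>{..<d} - {i0}. \<alpha> i) = \<delta>^(d-1)" unfolding \<alpha>_def using i0 by simp
    finally show "(\<Prod>i<d. \<alpha> i) = 1" unfolding \<alpha>_def using \<delta>0 by simp
    fix x assume x: "x \<in> Kvec K n"
    have q0: "Re (qform n (A i) x) \<ge> 0" if "i < d" for i using A that x unfolding psd_def by blast
    have "(\<Sum>i<d. \<alpha> i * Re (qform n (A i) x)) \<le> (\<Sum>i<d. \<delta> * Re (qform n (A i) x))"
    proof (rule sum_mono)
      fix i assume "i \<in> {..<d}"
      then show "\<alpha> i * Re (qform n (A i) x) \<le> \<delta> * Re (qform n (A i) x)"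
        unfolding \<alpha>_def using z x q0 by auto
    qed
    also have "\<dots> \<le> (\<Sum>i<d. \<delta> * ((\<Sum>a<n. \<Sum>b<n. cmod (A i a b)) * vnorm2 n x))"
      using \<delta>0 qform_bound by (intro sum_mono mult_left_mono) auto
    also have "\<dots> = \<delta> * C * vnorm2 n x" unfolding C_def by (simp add: sum_distrib_left sum_distrib_right algebra_simps)
    finally have le: "(\<Sum>i<d. \<alpha> i * Re (qform n (A i) x)) \<le> \<delta> * C * vnorm2 n x" .
    have s0: "(\<Sum>i<d. \<alpha> i * Re (qform n (A i) x)) \<ge> 0"
      using q0 \<delta>0 unfolding \<alpha>_def by (intro sum_nonneg) auto
    have "(1 / real d) * (\<Sum>i<d. \<alpha> i * Re (qform n (A i) x)) \<le> (\<Sum>i<d. \<alpha> i * Re (qform n (A i) x))"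
      using d s0 by (simp add: divide_le_eq mult_le_cancel_left1)
    then show "\<delta> * C * vnorm2 n x - (1 / real d) * (\<Sum>i<d. \<alpha> i * Re (qform n (A i) x)) \<ge> 0" using le by linarith
  qed
qed

lemma pos_feasible:
  fixes d :: nat
  assumes K: "Kok K" and d: "d \<ge> 1" and A: "\<forall>i<d. psd K n (A i)"
    and pos: "\<forall>i<d. \<exists>x\<in>Kvec K n. Re (qform n (A i) x) > 0"
  shows "\<exists>X. psd K n X \<and> mtrace n X = 1 \<and> (\<forall>i<d. Re (frob n (A i) X) > 0)"
proof -
  have "\<forall>i. \<exists>v. i < d \<longrightarrow> v \<in> Kvec K n \<and> vnorm2 n v = 1 \<and> Re (qform n (A i) v) > 0"
  proof (intro allI impI)
    fix i
    show "\<exists>v. i < d \<longrightarrow> v \<in> Kvec K n \<and> vnorm2 n v = 1 \<and> Re (qform n (A i) v) > 0"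
    proof (cases "i < d")
      case True
      then obtain x where x: "x \<in> Kvec K n" "Re (qform n (A i) x) > 0" using pos by blast
      then have "vnorm2 n x \<noteq> 0" using vnorm2_zero by fastforce
      then have N: "vnorm2 n x > 0" using vnorm2_nonneg[of n x] by simp
      obtain v where "v \<in> Kvec K n" "vnorm2 n v = 1" "\<forall>M. qform n M v = complex_of_real (1 / vnorm2 n x) * qform n M x"
        using normalize[OF K x(1) N] by blast
      then show ?thesis using x N by (intro exI[of _ v]) simp
    qed auto
  qed
  then obtain vs where vs: "\<And>i. i < d \<Longrightarrow> vs i \<in> Kvec K n \<and> vnorm2 n (vs i) = 1 \<and> Re (qform n (A i) (vs i)) > 0"
    by metis
  define X where "X = mcomb {..<d} (\<lambda>_. 1 / real d) (\<lambda>l. rk1 (vs l))"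
  have PX: "psd K n X" unfolding X_def using vs psd_rk1[OF K] by (intro psd_mcomb[OF K]) auto
  have TX: "mtrace n X = 1" unfolding X_def mtrace_mcomb using vs mtrace_rk1 d
    by (simp add: flip: of_real_sum)
  have "Re (frob n (A i) X) > 0" if i: "i < d" for i
  proof -
    have H: "hermitian n (A i)" using A i unfolding psd_def by blast
    have e: "Re (frob n (A i) X) = (\<Sum>l<d. (1 / real d) * Re (qform n (A i) (vs l)))"
      unfolding X_def frob_mcomb frob_rk1[OF H] by (simp add: Re_sum)
    have nn: "\<forall>l<d. Re (qform n (A i) (vs l)) \<ge> 0" using A i vs unfolding psd_def by blast
    have "(1 / real d) * Re (qform n (A i) (vs i)) \<le> (\<Sum>l<d. (1 / real d) * Re (qform n (A i) (vs l)))"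
      using i nn by (intro member_le_sum) auto
    moreover have "(1 / real d) * Re (qform n (A i) (vs i)) > 0" using vs[OF i] d by simp
    ultimately show ?thesis unfolding e by linarith
  qed
  then show ?thesis using PX TX by blast
qed

lemma sum_subsets1: "(\<Sum>I\<in>subsetsK d 1. f I) = (\<Sum>i<d. f {i})"
  unfolding subsetsK_1 by (subst sum.reindex) (auto simp: inj_on_def)
lemma prod_subsets1: "(\<Prod>I\<in>subsetsK d 1. f I) = (\<Prod>i<d. f {i})"
  unfolding subsetsK_1 by (subst prod.reindex) (auto simp: inj_on_def)

lemma certs:
  fixes K :: "complex set" and n d :: nat and A :: "nat \<Rightarrow> nat \<Rightarrow> nat \<Rightarrow> complex"
  defines "S \<equiv> {root d (\<Prod>i<d. Re (frob n (A i) X)) | X. psd K n X \<and> mtrace n X = 1}"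
  assumes K: "Kok K" and d: "d \<ge> 1" and A: "\<forall>i<d. psd K n (A i)"
    and ne: "S \<noteq> {}" and bdd: "bdd_above S" and s0: "Sup S \<ge> 0" and e: "\<epsilon> > 0"
  shows "\<exists>V \<alpha>. 0 \<le> V \<and> V \<le> Sup S + \<epsilon> \<and> (\<forall>i<d. \<alpha> i > 0) \<and> (\<Prod>i<d. \<alpha> i) = 1 \<and>
     (\<forall>x\<in>Kvec K n. V * vnorm2 n x - (1 / real d) * (\<Sum>i<d. \<alpha> i * Re (qform n (A i) x)) \<ge> 0)"
proof (cases "\<exists>i0<d. \<forall>x\<in>Kvec K n. Re (qform n (A i0) x) = 0")
  case True
  then obtain i0 where "i0 < d" "\<forall>x\<in>Kvec K n. Re (qform n (A i0) x) = 0" by blast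
  from zero_cert[OF K d A this e] obtain V \<alpha> where "0 \<le> V" "V \<le> \<epsilon>" "\<forall>i<d. \<alpha> i > 0" "(\<Prod>i<d. \<alpha> i) = 1"
     "\<forall>x\<in>Kvec K n. V * vnorm2 n x - (1 / real d) * (\<Sum>i<d. \<alpha> i * Re (qform n (A i) x)) \<ge> 0" by blast
  then show ?thesis using s0 by (intro exI[of _ V] exI[of _ \<alpha>]) auto
next
  case False
  have pos: "\<forall>i<d. \<exists>x\<in>Kvec K n. Re (qform n (A i) x) > 0"
  proof (intro allI impI)
    fix i assume i: "i < d"
    then obtain x where x: "x \<in> Kvec K n" "Re (qform n (A i) x) \<noteq> 0" using False by blast
    moreover have "Re (qform n (A i) x) \<ge> 0" using A i x unfolding psd_def by blast
    ultimately show "\<exists>x\<in>Kvec K n. Re (qform n (A i) x) > 0" by force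
  qed
  obtain Xp where Xp: "psd K n Xp" "mtrace n Xp = 1" "\<forall>i<d. Re (frob n (A i) Xp) > 0"
    using pos_feasible[OF K d A pos] by blast
  have "(\<Prod>i<d. Re (frob n (A i) Xp)) > 0" using Xp(3) by (intro prod_pos) auto
  then have rp: "root d (\<Prod>i<d. Re (frob n (A i) Xp)) > 0" using d by simp
  have "root d (\<Prod>i<d. Re (frob n (A i) Xp)) \<le> Sup S" unfolding S_def
    by (rule cSup_upper) (use Xp bdd S_def in auto)
  then have spos: "Sup S > 0" using rp by linarith
  obtain X where X: "psd K n X" "mtrace n X = 1" and FX: "root d (\<Prod>i<d. Re (frob n (A i) X)) = Sup S"
    using exists_maximizer[where A=A and n=n and d=d, OF K] ne bdd unfolding S_def by blast
  define T where "T i = Re (frob n (A i) X)" for i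
  have T0: "T i \<ge> 0" if "i < d" for i unfolding T_def using frob_psd_nonneg[OF K _ X(1)] A that by blast
  have "root d (\<Prod>i<d. T i) > 0" using FX spos unfolding T_def by simp
  then have PT: "(\<Prod>i<d. T i) > 0" using d by simp
  have Tp: "\<forall>i<d. Re (frob n (A i) X) > 0"
  proof (intro allI impI)
    fix i assume i: "i < d"
    have "T i \<noteq> 0"
    proof
      assume "T i = 0"
      then have "(\<Prod>i<d. T i) = 0" using i by (intro prod_zero) auto
      then show False using PT by linarith
    qed
    then show "Re (frob n (A i) X) > 0" using T0[OF i] unfolding T_def by simp
  qed
  have mx: "\<forall>Y. psd K n Y \<and> mtrace n Y = 1 \<longrightarrow> (\<Prod>i<d. Re (frob n (A i) Y)) \<le> (\<Prod>i<d. Re (frob n (A i) X))"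
  proof (intro allI impI)
    fix Y assume Y: "psd K n Y \<and> mtrace n Y = 1"
    have "root d (\<Prod>i<d. Re (frob n (A i) Y)) \<le> Sup S" unfolding S_def
      by (rule cSup_upper) (use Y bdd S_def in auto)
    then have "root d (\<Prod>i<d. Re (frob n (A i) Y)) \<le> root d (\<Prod>i<d. Re (frob n (A i) X))" using FX by simp
    then show "(\<Prod>i<d. Re (frob n (A i) Y)) \<le> (\<Prod>i<d. Re (frob n (A i) X))" using d by simp
  qed
  have cert: "\<forall>x\<in>Kvec K n. Sup S * vnorm2 n x - (1 / real d) * (\<Sum>i<d. (Sup S / Re (frob n (A i) X)) * Re (qform n (A i) x)) \<ge> 0"
    by (rule pos_cert[OF K d A X Tp mx]) (use spos in simp)
  have pr: "(\<Prod>i<d. Sup S / Re (frob n (A i) X)) = 1"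
  proof -
    have "(\<Prod>i<d. Sup S / T i) = Sup S ^ d / (\<Prod>i<d. T i)" by (simp add: prod_dividef)
    also have "Sup S ^ d = (\<Prod>i<d. T i)" unfolding FX[symmetric] T_def using d PT T_def by simp
    finally have "(\<Prod>i<d. Sup S / T i) = (\<Prod>i<d. T i) / (\<Prod>i<d. T i)" .
    moreover have "(\<Prod>i<d. T i) \<noteq> 0" using PT by linarith
    ultimately have "(\<Prod>i<d. Sup S / T i) = 1" by (metis divide_self)
    then show ?thesis unfolding T_def .
  qed
  show ?thesis
    by (intro exI[of _ "Sup S"] exI[of _ "\<lambda>i. Sup S / Re (frob n (A i) X)"] conjI)
       (use spos e Tp pr cert in auto)
qed

theorem mainTheorem14:
  fixes K :: "complex set" and n d :: nat and A :: "nat \<Rightarrow> nat \<Rightarrow> nat \<Rightarrow> complex"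
  assumes "K = \<real> \<or> K = UNIV"
    and "1 \<le> n" and "1 \<le> d"
    and "\<forall>i<d. psd K n (A i)"
  shows "OptSOS K n d A d \<le> OptSOS K n d A 1 \<and> OptSOS K n d A 1 = OptSDP K n d A"
proof -
  have K: "Kok K" using assms(1) .
  have d: "d \<ge> 1" using assms(3) .
  have A: "\<forall>i<d. psd K n (A i)" using assms(4) .
  define S where "S = {root d (\<Prod>i<d. Re (frob n (A i) X)) | X. psd K n X \<and> mtrace n X = 1}"
  have SDP: "OptSDP K n d A = Sup S" unfolding OptSDP_def S_def ..
  define e0 where "e0 = (\<lambda>j::nat. if j = 0 then (1::complex) else 0)"
  have e0K: "e0 \<in> Kvec K n" using K unfolding Kvec_def e0_def by auto
  have e0n: "vnorm2 n e0 = 1"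
  proof -
    have "vnorm2 n e0 = (\<Sum>j<n. if j = 0 then 1 else 0)" unfolding vnorm2_def
      by (rule sum.cong) (auto simp: e0_def)
    also have "\<dots> = 1" using assms(2) by (subst sum.delta) auto
    finally show ?thesis .
  qed
  have X0: "psd K n (rk1 e0)" "mtrace n (rk1 e0) = 1" using psd_rk1[OF K e0K] mtrace_rk1[of n e0] e0n by auto
  have ne: "S \<noteq> {}" unfolding S_def using X0 by blast
  define C where "C = (\<Sum>i<d. \<Sum>a<n. \<Sum>b<n. cmod (A i a b))"
  have crude: "\<forall>x\<in>Kvec K n. C * vnorm2 n x - (1 / real d) * (\<Sum>i<d. 1 * Re (qform n (A i) x)) \<ge> 0"
  proof
    fix x assume x: "x \<in> Kvec K n"
    have q0: "Re (qform n (A i) x) \<ge> 0" if "i < d" for i using A that x unfolding psd_def by blast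
    have s0: "(\<Sum>i<d. Re (qform n (A i) x)) \<ge> 0" using q0 by (intro sum_nonneg) auto
    have "(\<Sum>i<d. Re (qform n (A i) x)) \<le> (\<Sum>i<d. (\<Sum>a<n. \<Sum>b<n. cmod (A i a b)) * vnorm2 n x)"
      using qform_bound by (intro sum_mono) auto
    also have "\<dots> = C * vnorm2 n x" unfolding C_def by (simp add: sum_distrib_right)
    finally have le: "(\<Sum>i<d. Re (qform n (A i) x)) \<le> C * vnorm2 n x" .
    have "(1 / real d) * (\<Sum>i<d. Re (qform n (A i) x)) \<le> (\<Sum>i<d. Re (qform n (A i) x))"
      using d s0 by (simp add: divide_le_eq mult_le_cancel_left1)
    then show "C * vnorm2 n x - (1 / real d) * (\<Sum>i<d. 1 * Re (qform n (A i) x)) \<ge> 0" using le by simp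
  qed
  have bdd: "bdd_above S"
  proof (rule bdd_aboveI)
    fix y assume "y \<in> S"
    then obtain X where X: "psd K n X" "mtrace n X = 1" "y = root d (\<Prod>i<d. Re (frob n (A i) X))"
      unfolding S_def by blast
    show "y \<le> C" unfolding X(3) by (rule weak_duality[OF K d A _ _ crude X(1,2)]) auto
  qed
  have s0: "Sup S \<ge> 0"
  proof -
    have "(\<Prod>i<d. Re (frob n (A i) (rk1 e0))) \<ge> 0"
      using frob_psd_nonneg[OF K _ X0(1)] A by (intro prod_nonneg) auto
    then have "root d (\<Prod>i<d. Re (frob n (A i) (rk1 e0))) \<ge> 0" by (rule real_root_ge_zero)
    moreover have "root d (\<Prod>i<d. Re (frob n (A i) (rk1 e0))) \<le> Sup S"
      by (rule cSup_upper[OF _ bdd]) (use X0 S_def in auto)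
    ultimately show ?thesis by linarith
  qed
  have cert: "\<exists>V \<alpha>. 0 \<le> V \<and> V \<le> Sup S + \<epsilon> \<and> (\<forall>i<d. \<alpha> i > 0) \<and> (\<Prod>i<d. \<alpha> i) = 1 \<and>
     (\<forall>x\<in>Kvec K n. V * vnorm2 n x - (1 / real d) * (\<Sum>i<d. \<alpha> i * Re (qform n (A i) x)) \<ge> 0)"
    if e: "\<epsilon> > 0" for \<epsilon>
    using certs[OF K d A _ _ _ e] ne bdd s0 unfolding S_def by blast
  have cert_sos: "sos K n (\<lambda>x. V * vnorm2 n x - (1 / real d) * (\<Sum>i<d. \<alpha> i * Re (qform n (A i) x)))"
    if nn: "\<forall>x\<in>Kvec K n. V * vnorm2 n x - (1 / real d) * (\<Sum>i<d. \<alpha> i * Re (qform n (A i) x)) \<ge> 0" for V \<alpha>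
  proof -
    define M where "M = Mlin d V (\<lambda>i. \<alpha> i / real d) A"
    have qM: "Re (qform n M x) = V * vnorm2 n x - (1 / real d) * (\<Sum>i<d. \<alpha> i * Re (qform n (A i) x))" for x
      unfolding M_def qform_Mlin by (simp add: Re_sum sum_distrib_left)
    have PM: "psd K n M" unfolding M_def by (rule psd_Mlin[OF K A]) (use nn qM M_def in auto)
    show ?thesis using psd_sos[OF K PM] qM by simp
  qed
  define T1 where "T1 = {root 1 lam | lam \<alpha>. lam \<ge> 0 \<and>
      (\<forall>I\<in>subsetsK d 1. \<alpha> I > 0) \<and> (\<Prod>I\<in>subsetsK d 1. \<alpha> I) \<ge> 1 \<and>
      sos K n (\<lambda>x. lam * vnorm2 n x ^ 1 - (1 / real (d choose 1)) *
         (\<Sum>I\<in>subsetsK d 1. \<alpha> I * (\<Prod>i\<in>I. Re (qform n (A i) x))))}"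
  have O1: "OptSOS K n d A 1 = Inf T1" unfolding OptSOS_def T1_def ..
  define Td where "Td = {root d lam | lam \<alpha>. lam \<ge> 0 \<and>
      (\<forall>I\<in>subsetsK d d. \<alpha> I > 0) \<and> (\<Prod>I\<in>subsetsK d d. \<alpha> I) \<ge> 1 \<and>
      sos K n (\<lambda>x. lam * vnorm2 n x ^ d - (1 / real (d choose d)) *
         (\<Sum>I\<in>subsetsK d d. \<alpha> I * (\<Prod>i\<in>I. Re (qform n (A i) x))))}"
  have Od: "OptSOS K n d A d = Inf Td" unfolding OptSOS_def Td_def ..
  have fun1: "(\<lambda>x. lam * vnorm2 n x ^ 1 - (1 / real (d choose 1)) *
         (\<Sum>I\<in>subsetsK d 1. \<alpha> I * (\<Prod>i\<in>I. Re (qform n (A i) x))))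
     = (\<lambda>x. lam * vnorm2 n x - (1 / real d) * (\<Sum>i<d. \<alpha> {i} * Re (qform n (A i) x)))" for lam \<alpha>
    unfolding sum_subsets1 by simp
  have memT1: "V \<in> T1" if "0 \<le> V" "\<forall>i<d. \<alpha> i > 0" "(\<Prod>i<d. \<alpha> i) = 1"
      "\<forall>x\<in>Kvec K n. V * vnorm2 n x - (1 / real d) * (\<Sum>i<d. \<alpha> i * Re (qform n (A i) x)) \<ge> 0" for V \<alpha>
  proof -
    define \<alpha>' where "\<alpha>' I = \<alpha> (the_elem I)" for I :: "nat set"
    have "sos K n (\<lambda>x. V * vnorm2 n x ^ 1 - (1 / real (d choose 1)) *
         (\<Sum>I\<in>subsetsK d 1. \<alpha>' I * (\<Prod>i\<in>I. Re (qform n (A i) x))))"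
      unfolding fun1 \<alpha>'_def using cert_sos[OF that(4)] by simp
    moreover have "\<forall>I\<in>subsetsK d 1. \<alpha>' I > 0" using that(2) unfolding subsetsK_1 \<alpha>'_def by auto
    moreover have "(\<Prod>I\<in>subsetsK d 1. \<alpha>' I) \<ge> 1" using that(3) unfolding prod_subsets1 \<alpha>'_def by simp
    ultimately show ?thesis unfolding T1_def using that(1) by force
  qed
  have lowT1: "Sup S \<le> y" if "y \<in> T1" for y
  proof -
    obtain lam \<alpha> where y: "y = root 1 lam" "lam \<ge> 0" "\<forall>I\<in>subsetsK d 1. \<alpha> I > 0" "(\<Prod>I\<in>subsetsK d 1. \<alpha> I) \<ge> 1"
      "sos K n (\<lambda>x. lam * vnorm2 n x ^ 1 - (1 / real (d choose 1)) *
         (\<Sum>I\<in>subsetsK d 1. \<alpha> I * (\<Prod>i\<in>I. Re (qform n (A i) x))))"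
      using \<open>y \<in> T1\<close> unfolding T1_def mem_Collect_eq by (elim exE conjE) blast
    have b: "\<forall>i<d. \<alpha> {i} > 0" using y(3) unfolding subsetsK_1 by blast
    have pb: "(\<Prod>i<d. \<alpha> {i}) \<ge> 1" using y(4) unfolding prod_subsets1 .
    have y5: "sos K n (\<lambda>x. lam * vnorm2 n x - (1 / real d) * (\<Sum>i<d. \<alpha> {i} * Re (qform n (A i) x)))"
      using y(5) unfolding fun1 .
    have nn: "\<forall>x\<in>Kvec K n. lam * vnorm2 n x - (1 / real d) * (\<Sum>i<d. \<alpha> {i} * Re (qform n (A i) x)) \<ge> 0"
      using sos_nonneg[OF y5] by simp
    have "Sup S \<le> lam"
    proof (rule cSup_least[OF ne])
      fix z assume "z \<in> S"
      then obtain X where X: "psd K n X" "mtrace n X = 1" "z = root d (\<Prod>i<d. Re (frob n (A i) X))"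
        unfolding S_def by blast
      show "z \<le> lam" unfolding X(3) by (rule weak_duality[OF K d A b pb nn X(1,2)])
    qed
    then show ?thesis using y(1) by simp
  qed
  have memTd: "V \<in> Td" if "0 \<le> V" "\<forall>i<d. \<alpha> i > 0" "(\<Prod>i<d. \<alpha> i) = 1"
      "\<forall>x\<in>Kvec K n. V * vnorm2 n x - (1 / real d) * (\<Sum>i<d. \<alpha> i * Re (qform n (A i) x)) \<ge> 0" for V \<alpha>
  proof -
    have s: "sos K n (\<lambda>x. V^d * vnorm2 n x ^ d - (\<Prod>i<d. \<alpha> i) * (\<Prod>i<d. Re (qform n (A i) x)))"
      by (rule sos_d_certificate[OF K d A that(1) that(2) cert_sos[OF that(4)]])
    have s2: "sos K n (\<lambda>x. V^d * vnorm2 n x ^ d - (1 / real (d choose d)) *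
         (\<Sum>I\<in>subsetsK d d. (\<lambda>_. 1::real) I * (\<Prod>i\<in>I. Re (qform n (A i) x))))"
    proof -
      have "(\<lambda>x. V^d * vnorm2 n x ^ d - (1 / real (d choose d)) *
         (\<Sum>I\<in>subsetsK d d. (\<lambda>_. 1::real) I * (\<Prod>i\<in>I. Re (qform n (A i) x))))
         = (\<lambda>x. V^d * vnorm2 n x ^ d - (\<Prod>i<d. \<alpha> i) * (\<Prod>i<d. Re (qform n (A i) x)))"
        unfolding subsetsK_d that(3) by simp
      then show ?thesis using s by simp
    qed
    have r: "root d (V^d) = V" using d that(1) by (simp add: real_root_power_cancel)
    have "\<exists>lam \<alpha>. V = root d lam \<and> lam \<ge> 0 \<and>
      (\<forall>I\<in>subsetsK d d. \<alpha> I > 0) \<and> (\<Prod>I\<in>subsetsK d d. \<alpha> I) \<ge> 1 \<and>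
      sos K n (\<lambda>x. lam * vnorm2 n x ^ d - (1 / real (d choose d)) *
         (\<Sum>I\<in>subsetsK d d. \<alpha> I * (\<Prod>i\<in>I. Re (qform n (A i) x))))"
    proof (intro exI[of _ "V^d"] exI[of _ "\<lambda>_. 1::real"] conjI)
      show "V = root d (V^d)" using r by simp
      show "V^d \<ge> 0" using that(1) by simp
      show "\<forall>I\<in>subsetsK d d. (0::real) < 1" by simp
      show "(1::real) \<le> (\<Prod>I\<in>subsetsK d d. 1)" by simp
    qed (rule s2)
    then show ?thesis unfolding Td_def mem_Collect_eq .
  qed
  have bT1: "bdd_below T1" using lowT1 by (rule bdd_belowI)
  have bTd: "bdd_below Td"
  proof (rule bdd_belowI[of _ 0])
    fix y assume "y \<in> Td" then show "0 \<le> y" unfolding Td_def by (auto intro: real_root_ge_zero)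
  qed
  obtain V1 \<alpha>1 where c1: "0 \<le> V1" "V1 \<le> Sup S + 1" "\<forall>i<d. \<alpha>1 i > 0" "(\<Prod>i<d. \<alpha>1 i) = 1"
     "\<forall>x\<in>Kvec K n. V1 * vnorm2 n x - (1 / real d) * (\<Sum>i<d. \<alpha>1 i * Re (qform n (A i) x)) \<ge> 0"
    using cert[of 1] by auto
  have neT1: "T1 \<noteq> {}" using memT1[OF c1(1,3,4,5)] by blast
  have I1: "Inf T1 = Sup S"
  proof (rule antisym)
    show "Sup S \<le> Inf T1" by (rule cInf_greatest[OF neT1 lowT1])
    show "Inf T1 \<le> Sup S"
    proof (rule field_le_epsilon)
      fix e :: real assume e: "0 < e"
      obtain V \<alpha> where c: "0 \<le> V" "V \<le> Sup S + e" "\<forall>i<d. \<alpha> i > 0" "(\<Prod>i<d. \<alpha> i) = 1"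
        "\<forall>x\<in>Kvec K n. V * vnorm2 n x - (1 / real d) * (\<Sum>i<d. \<alpha> i * Re (qform n (A i) x)) \<ge> 0"
        using cert[OF e] by blast
      have "Inf T1 \<le> V" by (rule cInf_lower[OF memT1[OF c(1,3,4,5)] bT1])
      then show "Inf T1 \<le> Sup S + e" using c(2) by linarith
    qed
  qed
  have Id: "Inf Td \<le> Sup S"
  proof (rule field_le_epsilon)
    fix e :: real assume e: "0 < e"
    obtain V \<alpha> where c: "0 \<le> V" "V \<le> Sup S + e" "\<forall>i<d. \<alpha> i > 0" "(\<Prod>i<d. \<alpha> i) = 1"
      "\<forall>x\<in>Kvec K n. V * vnorm2 n x - (1 / real d) * (\<Sum>i<d. \<alpha> i * Re (qform n (A i) x)) \<ge> 0"
      using cert[OF e] by blast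
    have "Inf Td \<le> V" by (rule cInf_lower[OF memTd[OF c(1,3,4,5)] bTd])
    then show "Inf Td \<le> Sup S + e" using c(2) by linarith
  qed
  show ?thesis unfolding O1 Od SDP I1 using Id by simp
qed

end
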